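(* Let $L$ be a multisorted algebra in the positive existential signature satisfying axioms (1), (2), (3), (7), (8), (9), (10). Let $M_1$ be a model of the almost morphic conditions of $L$. Then there is a model $M_2\supseteq M_1$ of the almost morphic conditions of $L$ which has witnesses over $M_1$.
   Context: The Boolean prime ideal theorem (equivalently, compactness) is assumed. Signature. There is a sort $n$ for each $n\ge0$. For every function $\alpha\colon\{1,\dots,n\}\to\{1,\dots,k\}$ there is a unary function symbol ("substitution") $\alpha\colon n\to k$ (argument of sort $n$, value of sort $k$). Each sort has $0,1,\vee,\wedge$; for each $n$ there is $\exists\colon n+1\to n$ (positive existential signature). For $\alpha\colon k\to n$, $\beta\colon n\to m$, $\beta\circ\alpha$ is the substitution symbol of the composite function. $\alpha^{\mathrm{tuple}}(x_1,\dots,x_k)=(x_{\alpha(1)},\dots,x_{\alpha(n)})$. The associated cylindrification of $\exists\colon n+1\to n$ is $c\colon n\to n+1$, $c(i)=i$; $\exists^{(n)}$ is $n$-fold projection. $x\le y$ means $x=x\wedge y$. Axioms: (1) each sort is a bounded distributive lattice; (2) substitutions preserve $0,1,\vee,\wedge$; (3) $(\beta\circ\alpha)(r)=\beta(\alpha(r))$; (7) $\exists(0)=0$, $\exists(r\vee s)=\exists(r)\vee\exists(s)$; (8) $r\le c(\exists(r))$; (9) $\exists(r\wedge c(s))=\exists(r)\wedge s$; (10) for substitutions $\alpha_i\colon k_i\to m$ ($i=1,\dots,n$) and $\beta_i\colon k_i+1\to m+n$ with $\beta_i(j)=\alpha_i(j)$ for $j\le k_i$, $\beta_i(k_i+1)=m+i$: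 $\exists^{(n)}(\bigwedge_i\beta_i(r_i))=\bigwedge_i\alpha_i(\exists(r_i))$ for all $r_i$ of sort $k_i+1$. Almost morphic conditions. Consider the first order relational language with an $n$-ary relation symbol (also written $r$) for each element $r$ of sort $n$ of $L$. The almost morphic conditions of $L$ are the sentences: $\forall\bar x\,\neg 0(\bar x)$; $\forall\bar x\, 1(\bar x)$; $\forall\bar x\,((r\vee s)(\bar x)\leftrightarrow r(\bar x)\lor s(\bar x))$; $\forall\bar x\,((r\wedge s)(\bar x)\leftrightarrow r(\bar x)\land s(\bar x))$; $\forall\bar x\,((\alpha(r))(\bar x)\leftrightarrow r(\alpha^{\mathrm{tuple}}(\bar x)))$ for every substitution $\alpha$ and $r$ of matching sort; and $\forall\bar x\,\forall y\,(r(\bar xy)\to(\exists(r))(\bar x))$ (all for elements of appropriate sorts). For a model $M$ and an $n$-tuple $\bar a$ from $M$, ${\mathfrak p}(\bar a)=\{r \text{ of sort } n: M\models r(\bar a)\}$, which is a prime filter on sort $n$. For a prime filter $G$ on sort $n+1$, $c^{-1}(G)=\{u \text{ of sort } n: c(u)\in G\}$. Witnesses: if $M_1\subseteq M_2$ (substructure) are models of the almost morphic conditions, $M_2$ has witnesses over $M_1$ if for every tuple $\bar a=(a_1,\dots,a_n)$ from $M_1$ and every prime filter $G$ on sort $n+1$ of $L$ with $c^{-1}(G)={\mathfrak p}(\bar a)$, there is $b\in M_2$ with $M_2\models r(\bar a b)$ for every $r\in G$. A prime filter is a proper, nonempty, upward-closed, $\wedge$-closed subset of a sort with $x\vee y\in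 F\Rightarrow x\in F$ or $y\in F$. *)

theory Defs
  imports "HOL-Library.FuncSet"
begin

text \<open>All sorts live in
  one HOL type 'e; sort n is the carrier S n.  A substitution symbol alpha : n -> k is a
  function alpha in {1..n} ->E {1..k} (extensional), and sub n k alpha is its operation
  from sort n to sort k.  ex n is the existential quantifier from sort n+1 to sort n.\<close>

record 'e pe_alg =
  S    :: "nat \<Rightarrow> 'e set"
  zero :: "nat \<Rightarrow> 'e"
  one  :: "nat \<Rightarrow> 'e"
  join :: "nat \<Rightarrow> 'e \<Rightarrow> 'e \<Rightarrow> 'e"
  meet :: "nat \<Rightarrow> 'e \<Rightarrow> 'e \<Rightarrow> 'e"
  sub  :: "nat \<Rightarrow> nat \<Rightarrow> (nat \<Rightarrow> nat) \<Rightarrow> 'e \<Rightarrow> 'e"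
  ex   :: "nat \<Rightarrow> 'e \<Rightarrow> 'e"

definition substs :: "nat \<Rightarrow> nat \<Rightarrow> (nat \<Rightarrow> nat) set" where
  "substs n k = {1..n} \<rightarrow>\<^sub>E {1..k}"

definition le :: "('e, 'z) pe_alg_scheme \<Rightarrow> nat \<Rightarrow> 'e \<Rightarrow> 'e \<Rightarrow> bool" where
  "le L n x y \<longleftrightarrow> x = meet L n x y"

definition cyl :: "nat \<Rightarrow> (nat \<Rightarrow> nat)" where
  "cyl n = restrict (\<lambda>i. i) {1..n}"

fun exs :: "('e, 'z) pe_alg_scheme \<Rightarrow> nat \<Rightarrow> nat \<Rightarrow> 'e \<Rightarrow> 'e" where
  "exs L m 0 x = x"
| "exs L m (Suc n) x = exs L m n (ex L (m + n) x)"

fun bigmeet :: "('e, 'z) pe_alg_scheme \<Rightarrow> nat \<Rightarrow> nat \<Rightarrow> (nat \<Rightarrow> 'e) \<Rightarrow> 'e" where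
  "bigmeet L k 0 f = one L k"
| "bigmeet L k (Suc n) f = meet L k (bigmeet L k n f) (f (Suc n))"

definition pe_algebra :: "('e, 'z) pe_alg_scheme \<Rightarrow> bool" where
  "pe_algebra L \<longleftrightarrow>
     (\<forall>n. zero L n \<in> S L n \<and> one L n \<in> S L n \<and>
        (\<forall>x\<in>S L n. \<forall>y\<in>S L n. join L n x y \<in> S L n \<and> meet L n x y \<in> S L n)) \<and>
     (\<forall>n k \<alpha> r. \<alpha> \<in> substs n k \<longrightarrow> r \<in> S L n \<longrightarrow> sub L n k \<alpha> r \<in> S L k) \<and>
     (\<forall>n r. r \<in> S L (Suc n) \<longrightarrow> ex L n r \<in> S L n)"

definition ax1 :: "('e, 'z) pe_alg_scheme \<Rightarrow> bool" where
  "ax1 L \<longleftrightarrow> (\<forall>n. \<forall>x\<in>S L n. \<forall>y\<in>S L n. \<forall>z\<in>S L n.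
      join L n (join L n x y) z = join L n x (join L n y z) \<and>
      meet L n (meet L n x y) z = meet L n x (meet L n y z) \<and>
      join L n x y = join L n y x \<and> meet L n x y = meet L n y x \<and>
      join L n x x = x \<and> meet L n x x = x \<and>
      join L n x (meet L n x y) = x \<and> meet L n x (join L n x y) = x \<and>
      meet L n x (join L n y z) = join L n (meet L n x y) (meet L n x z) \<and>
      join L n (zero L n) x = x \<and> meet L n (one L n) x = x)"

definition ax2 :: "('e, 'z) pe_alg_scheme \<Rightarrow> bool" where
  "ax2 L \<longleftrightarrow> (\<forall>n k \<alpha>. \<alpha> \<in> substs n k \<longrightarrow>
      sub L n k \<alpha> (zero L n) = zero L k \<and> sub L n k \<alpha> (one L n) = one L k \<and>
      (\<forall>r\<in>S L n. \<forall>s\<in>S L n.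
         sub L n k \<alpha> (join L n r s) = join L k (sub L n k \<alpha> r) (sub L n k \<alpha> s) \<and>
         sub L n k \<alpha> (meet L n r s) = meet L k (sub L n k \<alpha> r) (sub L n k \<alpha> s)))"

definition ax3 :: "('e, 'z) pe_alg_scheme \<Rightarrow> bool" where
  "ax3 L \<longleftrightarrow> (\<forall>k n m \<alpha> \<beta>. \<alpha> \<in> substs k n \<longrightarrow> \<beta> \<in> substs n m \<longrightarrow>
      (\<forall>r\<in>S L k. sub L k m (restrict (\<beta> \<circ> \<alpha>) {1..k}) r = sub L n m \<beta> (sub L k n \<alpha> r)))"

definition ax7 :: "('e, 'z) pe_alg_scheme \<Rightarrow> bool" where
  "ax7 L \<longleftrightarrow> (\<forall>n. ex L n (zero L (Suc n)) = zero L n \<and>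
      (\<forall>r\<in>S L (Suc n). \<forall>s\<in>S L (Suc n).
         ex L n (join L (Suc n) r s) = join L n (ex L n r) (ex L n s)))"

definition ax8 :: "('e, 'z) pe_alg_scheme \<Rightarrow> bool" where
  "ax8 L \<longleftrightarrow> (\<forall>n. \<forall>r\<in>S L (Suc n). le L (Suc n) r (sub L n (Suc n) (cyl n) (ex L n r)))"

definition ax9 :: "('e, 'z) pe_alg_scheme \<Rightarrow> bool" where
  "ax9 L \<longleftrightarrow> (\<forall>n. \<forall>r\<in>S L (Suc n). \<forall>s\<in>S L n.
      ex L n (meet L (Suc n) r (sub L n (Suc n) (cyl n) s)) = meet L n (ex L n r) s)"

text \<open>Axiom (10).  k i is the arity k_i, alpha i : k_i -> m, beta_i : k_i+1 -> m+n.\<close>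
definition ax10 :: "('e, 'z) pe_alg_scheme \<Rightarrow> bool" where
  "ax10 L \<longleftrightarrow> (\<forall>n m (k :: nat \<Rightarrow> nat) (\<alpha> :: nat \<Rightarrow> nat \<Rightarrow> nat) (r :: nat \<Rightarrow> 'e).
      (\<forall>i\<in>{1..n}. \<alpha> i \<in> substs (k i) m \<and> r i \<in> S L (Suc (k i))) \<longrightarrow>
      exs L m n (bigmeet L (m + n) n (\<lambda>i.
          sub L (Suc (k i)) (m + n)
              (restrict (\<lambda>j. if j \<le> k i then \<alpha> i j else m + i) {1..Suc (k i)}) (r i)))
      = bigmeet L m n (\<lambda>i. sub L (k i) m (\<alpha> i) (ex L (k i) (r i))))"

text \<open>alpha^tuple(x_1..x_k) = (x_alpha(1), ..., x_alpha(n)); tuples are lists (x_i = xs ! (i-1)).\<close>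
definition tup :: "nat \<Rightarrow> (nat \<Rightarrow> nat) \<Rightarrow> 'm list \<Rightarrow> 'm list" where
  "tup n \<alpha> xs = map (\<lambda>j. xs ! (\<alpha> j - 1)) [1..<Suc n]"

text \<open>A model: nonempty domain D and interpretation R, where r of sort n is interpreted
  as the n-ary relation {xs. length xs = n \<and> R r xs}.\<close>
definition almost_morphic ::
  "('e, 'z) pe_alg_scheme \<Rightarrow> 'm set \<Rightarrow> ('e \<Rightarrow> 'm list \<Rightarrow> bool) \<Rightarrow> bool" where
  "almost_morphic L D R \<longleftrightarrow> D \<noteq> {} \<and>
    (\<forall>n. \<forall>xs\<in>lists D. length xs = n \<longrightarrow>
        \<not> R (zero L n) xs \<and> R (one L n) xs \<and>
        (\<forall>r\<in>S L n. \<forall>s\<in>S L n.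
           (R (join L n r s) xs \<longleftrightarrow> R r xs \<or> R s xs) \<and>
           (R (meet L n r s) xs \<longleftrightarrow> R r xs \<and> R s xs))) \<and>
    (\<forall>n k \<alpha>. \<alpha> \<in> substs n k \<longrightarrow> (\<forall>r\<in>S L n. \<forall>xs\<in>lists D. length xs = k \<longrightarrow>
        (R (sub L n k \<alpha> r) xs \<longleftrightarrow> R r (tup n \<alpha> xs)))) \<and>
    (\<forall>n. \<forall>r\<in>S L (Suc n). \<forall>xs\<in>lists D. \<forall>y\<in>D. length xs = n \<longrightarrow>
        R r (xs @ [y]) \<longrightarrow> R (ex L n r) xs)"

definition prime_filter :: "('e, 'z) pe_alg_scheme \<Rightarrow> nat \<Rightarrow> 'e set \<Rightarrow> bool" where
  "prime_filter L n F \<longleftrightarrow> F \<subseteq> S L n \<and> F \<noteq> {} \<and> F \<noteq> S L n \<and>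
     (\<forall>x\<in>F. \<forall>y\<in>S L n. le L n x y \<longrightarrow> y \<in> F) \<and>
     (\<forall>x\<in>F. \<forall>y\<in>F. meet L n x y \<in> F) \<and>
     (\<forall>x\<in>S L n. \<forall>y\<in>S L n. join L n x y \<in> F \<longrightarrow> x \<in> F \<or> y \<in> F)"

definition ptype :: "('e, 'z) pe_alg_scheme \<Rightarrow> ('e \<Rightarrow> 'm list \<Rightarrow> bool) \<Rightarrow> 'm list \<Rightarrow> 'e set" where
  "ptype L R as = {r \<in> S L (length as). R r as}"

definition cyl_inv :: "('e, 'z) pe_alg_scheme \<Rightarrow> nat \<Rightarrow> 'e set \<Rightarrow> 'e set" where
  "cyl_inv L n G = {u \<in> S L n. sub L n (Suc n) (cyl n) u \<in> G}"

definition substructure ::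
  "('e, 'z) pe_alg_scheme \<Rightarrow> ('m \<Rightarrow> 'n) \<Rightarrow> 'm set \<Rightarrow> ('e \<Rightarrow> 'm list \<Rightarrow> bool)
     \<Rightarrow> 'n set \<Rightarrow> ('e \<Rightarrow> 'n list \<Rightarrow> bool) \<Rightarrow> bool" where
  "substructure L f D1 R1 D2 R2 \<longleftrightarrow> inj_on f D1 \<and> f ` D1 \<subseteq> D2 \<and>
     (\<forall>n. \<forall>r\<in>S L n. \<forall>as\<in>lists D1. length as = n \<longrightarrow> (R2 r (map f as) \<longleftrightarrow> R1 r as))"

definition has_witnesses ::
  "('e, 'z) pe_alg_scheme \<Rightarrow> ('m \<Rightarrow> 'n) \<Rightarrow> 'm set \<Rightarrow> ('e \<Rightarrow> 'm list \<Rightarrow> bool)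
     \<Rightarrow> 'n set \<Rightarrow> ('e \<Rightarrow> 'n list \<Rightarrow> bool) \<Rightarrow> bool" where
  "has_witnesses L f D1 R1 D2 R2 \<longleftrightarrow>
     (\<forall>as\<in>lists D1. \<forall>G. prime_filter L (Suc (length as)) G \<longrightarrow>
        cyl_inv L (length as) G = ptype L R1 as \<longrightarrow>
        (\<exists>b\<in>D2. \<forall>r\<in>G. R2 r (map f as @ [b])))"

end

theory Submission
  imports Defs
begin


definition gfilt :: "'a set \<Rightarrow> ('a \<Rightarrow> 'a \<Rightarrow> 'a) \<Rightarrow> 'a set \<Rightarrow> bool" where
  "gfilt A mt P \<longleftrightarrow> P \<subseteq> A \<and> (\<forall>x\<in>P. \<forall>y\<in>A. mt x y = x \<longrightarrow> y \<in> P) \<and> (\<forall>x\<in>P. \<forall>y\<in>P. mt x y \<in> P)"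

lemma prime_ext:
  fixes A :: "'a set" and mt jn :: "'a \<Rightarrow> 'a \<Rightarrow> 'a"
  assumes clm: "\<And>x y. x\<in>A \<Longrightarrow> y\<in>A \<Longrightarrow> mt x y \<in> A"
    and clj: "\<And>x y. x\<in>A \<Longrightarrow> y\<in>A \<Longrightarrow> jn x y \<in> A"
    and assoc: "\<And>x y z. x\<in>A \<Longrightarrow> y\<in>A \<Longrightarrow> z\<in>A \<Longrightarrow> mt (mt x y) z = mt x (mt y z)"
    and comm: "\<And>x y. x\<in>A \<Longrightarrow> y\<in>A \<Longrightarrow> mt x y = mt y x"
    and idem: "\<And>x. x\<in>A \<Longrightarrow> mt x x = x"
    and distr: "\<And>x y z. x\<in>A \<Longrightarrow> y\<in>A \<Longrightarrow> z\<in>A \<Longrightarrow> mt x (jn y z) = jn (mt x y) (mt x z)"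
    and phiup: "\<And>x y. x\<in>A \<Longrightarrow> y\<in>A \<Longrightarrow> mt x y = x \<Longrightarrow> \<phi> x \<Longrightarrow> \<phi> y"
    and phipr: "\<And>x y. x\<in>A \<Longrightarrow> y\<in>A \<Longrightarrow> \<phi> (jn x y) \<Longrightarrow> \<phi> x \<or> \<phi> y"
    and F0: "gfilt A mt F0" "F0 \<noteq> {}" "\<forall>x\<in>F0. \<phi> x"
  shows "\<exists>Q. F0 \<subseteq> Q \<and> gfilt A mt Q \<and> (\<forall>x\<in>Q. \<phi> x) \<and>
             (\<forall>x\<in>A. \<forall>y\<in>A. jn x y \<in> Q \<longrightarrow> x \<in> Q \<or> y \<in> Q)"
proof -
  have trans: "mt x z = x" if "x\<in>A" "y\<in>A" "z\<in>A" "mt x y = x" "mt y z = y" for x y z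
    by (metis assoc that)
  have lb1: "mt (mt x y) x = mt x y" if "x\<in>A" "y\<in>A" for x y
    by (metis assoc comm idem that)
  have lb2: "mt (mt x y) y = mt x y" if "x\<in>A" "y\<in>A" for x y
    by (metis assoc idem that)
  have glb: "mt x (mt y z) = x" if "x\<in>A" "y\<in>A" "z\<in>A" "mt x y = x" "mt x z = x" for x y z
    by (metis assoc that)
  define Fam where "Fam = {P. F0 \<subseteq> P \<and> gfilt A mt P \<and> (\<forall>x\<in>P. \<phi> x)}"
  have "\<exists>M\<in>Fam. \<forall>X\<in>Fam. M \<subseteq> X \<longrightarrow> X = M"
  proof (rule subset_Zorn_nonempty)
    show "Fam \<noteq> {}" using F0 unfolding Fam_def by blast
    fix C assume C: "C \<noteq> {}" "subset.chain Fam C"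
    hence CF: "C \<subseteq> Fam" and ch: "\<forall>X\<in>C. \<forall>Y\<in>C. X \<subseteq> Y \<or> Y \<subseteq> X"
      by (auto simp: subset_chain_def)
    show "\<Union>C \<in> Fam" unfolding Fam_def gfilt_def
    proof (intro CollectI conjI)
      show "F0 \<subseteq> \<Union>C" using C CF unfolding Fam_def by blast
      show "\<Union>C \<subseteq> A" using CF unfolding Fam_def gfilt_def by blast
      show "\<forall>x\<in>\<Union>C. \<forall>y\<in>A. mt x y = x \<longrightarrow> y \<in> \<Union>C"
        using CF unfolding Fam_def gfilt_def by blast
      show "\<forall>x\<in>\<Union>C. \<phi> x" using CF unfolding Fam_def by blast
      show "\<forall>x\<in>\<Union>C. \<forall>y\<in>\<Union>C. mt x y \<in> \<Union>C"
      proof (intro ballI)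
        fix x y assume "x \<in> \<Union>C" "y \<in> \<Union>C"
        then obtain X Y where XY: "X\<in>C" "Y\<in>C" "x\<in>X" "y\<in>Y" by blast
        show "mt x y \<in> \<Union>C"
        proof (cases "X \<subseteq> Y")
          case True thus ?thesis using XY CF unfolding Fam_def gfilt_def by blast
        next
          case False hence "Y \<subseteq> X" using ch XY by blast
          thus ?thesis using XY CF unfolding Fam_def gfilt_def by blast
        qed
      qed
    qed
  qed
  then obtain Q where Q: "Q \<in> Fam" and max: "\<And>X. X\<in>Fam \<Longrightarrow> Q \<subseteq> X \<Longrightarrow> X = Q" by blast
  have QA: "Q \<subseteq> A" and Qup: "\<And>x y. x\<in>Q \<Longrightarrow> y\<in>A \<Longrightarrow> mt x y = x \<Longrightarrow> y \<in> Q"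
    and Qm: "\<And>x y. x\<in>Q \<Longrightarrow> y\<in>Q \<Longrightarrow> mt x y \<in> Q" and Qphi: "\<And>x. x\<in>Q \<Longrightarrow> \<phi> x"
    and F0Q: "F0 \<subseteq> Q"
    using Q unfolding Fam_def gfilt_def by blast+
  have Qne: "Q \<noteq> {}" using F0Q F0(2) by blast
  have key: "\<exists>p\<in>Q. \<not> \<phi> (mt p a)" if a: "a\<in>A" "a \<notin> Q" for a
  proof (rule ccontr)
    assume H: "\<not> ?thesis"
    define Qa where "Qa = {y\<in>A. \<exists>p\<in>Q. mt (mt p a) y = mt p a}"
    have sub: "Q \<subseteq> Qa"
    proof
      fix y assume y: "y\<in>Q"
      hence "y \<in> A" using QA by blast
      hence "mt (mt y a) y = mt y a" using lb1 a by blast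
      thus "y \<in> Qa" using y \<open>y\<in>A\<close> unfolding Qa_def by blast
    qed
    have "Qa \<in> Fam" unfolding Fam_def gfilt_def
    proof (intro CollectI conjI)
      show "F0 \<subseteq> Qa" using F0Q sub by blast
      show "Qa \<subseteq> A" unfolding Qa_def by blast
      show "\<forall>x\<in>Qa. \<forall>y\<in>A. mt x y = x \<longrightarrow> y \<in> Qa"
      proof (intro ballI impI)
        fix x y assume "x\<in>Qa" "y\<in>A" "mt x y = x"
        then obtain p where p: "p\<in>Q" "x\<in>A" "mt (mt p a) x = mt p a" unfolding Qa_def by blast
        have "p\<in>A" using p QA by blast
        have "mt (mt p a) y = mt p a"
          using trans[of "mt p a" x y] p \<open>y\<in>A\<close> \<open>mt x y = x\<close> clm \<open>p\<in>A\<close> a by blast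
        thus "y \<in> Qa" using p \<open>y\<in>A\<close> unfolding Qa_def by blast
      qed
      show "\<forall>x\<in>Qa. \<forall>y\<in>Qa. mt x y \<in> Qa"
      proof (intro ballI)
        fix x y assume "x\<in>Qa" "y\<in>Qa"
        then obtain p p' where p: "p\<in>Q" "x\<in>A" "mt (mt p a) x = mt p a"
          and p': "p'\<in>Q" "y\<in>A" "mt (mt p' a) y = mt p' a" unfolding Qa_def by blast
        have pA: "p\<in>A" "p'\<in>A" using p p' QA by blast+
        define q where "q = mt p p'"
        have qQ: "q\<in>Q" using Qm p p' q_def by blast
        have qA: "q\<in>A" using qQ QA by blast
        have qaA: "mt q a \<in> A" using clm qA a by blast
        have "mt (mt q a) q = mt q a" using lb1 qA a by blast
        hence 1: "mt (mt q a) p = mt q a" using trans[of "mt q a" q p] lb1[of p p'] pA qaA qA q_def by metis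
        have "mt (mt q a) q = mt q a" using lb1 qA a by blast
        hence 2: "mt (mt q a) p' = mt q a" using trans[of "mt q a" q p'] lb2[of p p'] pA qaA qA q_def by metis
        have 3: "mt (mt q a) a = mt q a" using lb2 qA a by blast
        have 4: "mt (mt q a) (mt p a) = mt q a" using glb 1 3 qaA pA a by blast
        have 5: "mt (mt q a) (mt p' a) = mt q a" using glb 2 3 qaA pA a by blast
        have 6: "mt (mt q a) x = mt q a" using trans[of "mt q a" "mt p a" x] 4 p qaA clm pA a by blast
        have 7: "mt (mt q a) y = mt q a" using trans[of "mt q a" "mt p' a" y] 5 p' qaA clm pA a by blast
        have "mt (mt q a) (mt x y) = mt q a" using glb 6 7 qaA p p' by blast
        thus "mt x y \<in> Qa" unfolding Qa_def using qQ clm p p' by blast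
      qed
      show "\<forall>x\<in>Qa. \<phi> x"
      proof
        fix x assume "x\<in>Qa"
        then obtain p where p: "p\<in>Q" "x\<in>A" "mt (mt p a) x = mt p a" unfolding Qa_def by blast
        have "\<phi> (mt p a)" using H p by blast
        thus "\<phi> x" using phiup[of "mt p a" x] p clm QA a by blast
      qed
    qed
    hence "Qa = Q" using max sub by blast
    moreover obtain p where "p\<in>Q" using Qne by blast
    moreover hence "mt (mt p a) a = mt p a" using lb2 QA a by blast
    ultimately show False using a unfolding Qa_def by blast
  qed
  have prime: "\<forall>x\<in>A. \<forall>y\<in>A. jn x y \<in> Q \<longrightarrow> x \<in> Q \<or> y \<in> Q"
  proof (intro ballI impI, rule ccontr)
    fix a b assume ab: "a\<in>A" "b\<in>A" "jn a b \<in> Q" "\<not> (a \<in> Q \<or> b \<in> Q)"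
    obtain p where p: "p\<in>Q" "\<not> \<phi> (mt p a)" using key ab by blast
    obtain p' where p': "p'\<in>Q" "\<not> \<phi> (mt p' b)" using key ab by blast
    have pA: "p\<in>A" "p'\<in>A" using p p' QA by blast+
    define q where "q = mt p p'"
    have qQ: "q\<in>Q" using Qm p p' q_def by blast
    have qA: "q\<in>A" using qQ QA by blast
    have "mt q (jn a b) \<in> Q" using Qm qQ ab by blast
    hence "\<phi> (jn (mt q a) (mt q b))" using distr qA ab Qphi by metis
    hence "\<phi> (mt q a) \<or> \<phi> (mt q b)" using phipr clm qA ab by blast
    moreover have "mt (mt q a) (mt p a) = mt q a"
    proof -
      have 1: "mt (mt q a) p = mt q a"
        using trans[of "mt q a" q p] lb1[of q a] lb1[of p p'] pA qA ab clm q_def by metis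
      have 3: "mt (mt q a) a = mt q a" using lb2 qA ab by blast
      show ?thesis using glb 1 3 clm qA pA ab by blast
    qed
    moreover have "mt (mt q b) (mt p' b) = mt q b"
    proof -
      have 1: "mt (mt q b) p' = mt q b"
        using trans[of "mt q b" q p'] lb1[of q b] lb2[of p p'] pA qA ab clm q_def by metis
      have 3: "mt (mt q b) b = mt q b" using lb2 qA ab by blast
      show ?thesis using glb 1 3 clm qA pA ab by blast
    qed
    ultimately show False using phiup p p' clm qA pA ab by metis
  qed
  show ?thesis using F0Q Q prime unfolding Fam_def by blast
qed




locale pe =
  fixes L :: "('e,'z) pe_alg_scheme"
  assumes pe: "pe_algebra L" and a1: "ax1 L" and a2: "ax2 L" and a3: "ax3 L"
    and a7: "ax7 L" and a8: "ax8 L" and a9: "ax9 L" and a10: "ax10 L"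
begin

lemma zS[simp]: "zero L n \<in> S L n" and oS[simp]: "one L n \<in> S L n"
  using pe unfolding pe_algebra_def by blast+
lemma mS[simp]: "x\<in>S L n \<Longrightarrow> y\<in>S L n \<Longrightarrow> meet L n x y \<in> S L n"
  and jS[simp]: "x\<in>S L n \<Longrightarrow> y\<in>S L n \<Longrightarrow> join L n x y \<in> S L n"
  using pe unfolding pe_algebra_def by blast+
lemma subS[simp]: "\<alpha> \<in> substs n k \<Longrightarrow> r \<in> S L n \<Longrightarrow> sub L n k \<alpha> r \<in> S L k"
  using pe unfolding pe_algebra_def by blast
lemma exS[simp]: "r \<in> S L (Suc n) \<Longrightarrow> ex L n r \<in> S L n"
  using pe unfolding pe_algebra_def by blast

context fixes n :: nat and x y z assumes xyz: "x\<in>S L n" "y\<in>S L n" "z\<in>S L n"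
begin
lemma jassoc: "join L n (join L n x y) z = join L n x (join L n y z)" using a1 xyz unfolding ax1_def by blast
lemma massoc: "meet L n (meet L n x y) z = meet L n x (meet L n y z)" using a1 xyz unfolding ax1_def by blast
lemma mdistr: "meet L n x (join L n y z) = join L n (meet L n x y) (meet L n x z)" using a1 xyz unfolding ax1_def by blast
end
context fixes n :: nat and x y assumes xy: "x\<in>S L n" "y\<in>S L n"
begin
lemma jcomm: "join L n x y = join L n y x" using a1 xy unfolding ax1_def by blast
lemma mcomm: "meet L n x y = meet L n y x" using a1 xy unfolding ax1_def by blast
lemma jabs: "join L n x (meet L n x y) = x" using a1 xy unfolding ax1_def by blast
lemma mabs: "meet L n x (join L n x y) = x" using a1 xy unfolding ax1_def by blast
end
lemma jidem: "x\<in>S L n \<Longrightarrow> join L n x x = x" using a1 unfolding ax1_def by blast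
lemma midem: "x\<in>S L n \<Longrightarrow> meet L n x x = x" using a1 unfolding ax1_def by blast
lemma jzero: "x\<in>S L n \<Longrightarrow> join L n (zero L n) x = x" using a1 unfolding ax1_def by blast
lemma mone: "x\<in>S L n \<Longrightarrow> meet L n (one L n) x = x" using a1 unfolding ax1_def by blast

lemma le_refl: "x\<in>S L n \<Longrightarrow> le L n x x" by (simp add: le_def midem)
lemma le_trans: "x\<in>S L n \<Longrightarrow> y\<in>S L n \<Longrightarrow> z\<in>S L n \<Longrightarrow> le L n x y \<Longrightarrow> le L n y z \<Longrightarrow> le L n x z"
  unfolding le_def by (metis massoc)
lemma le_m1: "x\<in>S L n \<Longrightarrow> y\<in>S L n \<Longrightarrow> le L n (meet L n x y) x"
  unfolding le_def by (metis massoc mcomm midem mS)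
lemma le_m2: "x\<in>S L n \<Longrightarrow> y\<in>S L n \<Longrightarrow> le L n (meet L n x y) y"
  unfolding le_def by (metis massoc midem)
lemma le_glb: "x\<in>S L n \<Longrightarrow> y\<in>S L n \<Longrightarrow> z\<in>S L n \<Longrightarrow> le L n x y \<Longrightarrow> le L n x z \<Longrightarrow> le L n x (meet L n y z)"
  unfolding le_def by (metis massoc)
lemma le_mmono: "x\<in>S L n \<Longrightarrow> y\<in>S L n \<Longrightarrow> x'\<in>S L n \<Longrightarrow> y'\<in>S L n \<Longrightarrow> le L n x x' \<Longrightarrow> le L n y y'
   \<Longrightarrow> le L n (meet L n x y) (meet L n x' y')"
  by (meson le_glb le_m1 le_m2 le_trans mS)
lemma le_j1: "x\<in>S L n \<Longrightarrow> y\<in>S L n \<Longrightarrow> le L n x (join L n x y)"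
  unfolding le_def by (metis mabs)
lemma le_one: "x\<in>S L n \<Longrightarrow> le L n x (one L n)"
  unfolding le_def by (metis mcomm mone oS)
lemma le_zero: "x\<in>S L n \<Longrightarrow> le L n (zero L n) x"
  unfolding le_def by (metis jzero mabs zS)
lemma le_join_iff: "x\<in>S L n \<Longrightarrow> y\<in>S L n \<Longrightarrow> le L n x y \<longleftrightarrow> join L n x y = y"
  unfolding le_def by (metis jabs jcomm mabs mcomm)

lemma sub_zero: "\<alpha> \<in> substs n k \<Longrightarrow> sub L n k \<alpha> (zero L n) = zero L k" using a2 unfolding ax2_def by blast
lemma sub_one: "\<alpha> \<in> substs n k \<Longrightarrow> sub L n k \<alpha> (one L n) = one L k" using a2 unfolding ax2_def by blast
lemma sub_join: "\<alpha> \<in> substs n k \<Longrightarrow> r\<in>S L n \<Longrightarrow> s\<in>S L n \<Longrightarrow>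
  sub L n k \<alpha> (join L n r s) = join L k (sub L n k \<alpha> r) (sub L n k \<alpha> s)" using a2 unfolding ax2_def by blast
lemma sub_meet: "\<alpha> \<in> substs n k \<Longrightarrow> r\<in>S L n \<Longrightarrow> s\<in>S L n \<Longrightarrow>
  sub L n k \<alpha> (meet L n r s) = meet L k (sub L n k \<alpha> r) (sub L n k \<alpha> s)" using a2 unfolding ax2_def by blast
lemma sub_mono: "\<alpha> \<in> substs n k \<Longrightarrow> r\<in>S L n \<Longrightarrow> s\<in>S L n \<Longrightarrow> le L n r s \<Longrightarrow> le L k (sub L n k \<alpha> r) (sub L n k \<alpha> s)"
  unfolding le_def by (metis sub_meet)
lemma sub_comp: "\<alpha> \<in> substs k n \<Longrightarrow> \<beta> \<in> substs n m \<Longrightarrow> r\<in>S L k \<Longrightarrow>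
   sub L k m (restrict (\<beta> \<circ> \<alpha>) {1..k}) r = sub L n m \<beta> (sub L k n \<alpha> r)"
  using a3 unfolding ax3_def by blast

lemma ex_zero: "ex L n (zero L (Suc n)) = zero L n" using a7 unfolding ax7_def by blast
lemma ex_join: "r\<in>S L (Suc n) \<Longrightarrow> s\<in>S L (Suc n) \<Longrightarrow> ex L n (join L (Suc n) r s) = join L n (ex L n r) (ex L n s)"
  using a7 unfolding ax7_def by blast
lemma ex_mono: "r\<in>S L (Suc n) \<Longrightarrow> s\<in>S L (Suc n) \<Longrightarrow> le L (Suc n) r s \<Longrightarrow> le L n (ex L n r) (ex L n s)"
  by (metis ex_join exS le_join_iff)

lemma cyl_substs: "n \<le> k \<Longrightarrow> cyl n \<in> substs n k"
  unfolding cyl_def substs_def by auto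

lemma ex8: "r\<in>S L (Suc n) \<Longrightarrow> le L (Suc n) r (sub L n (Suc n) (cyl n) (ex L n r))"
  using a8 unfolding ax8_def by blast
lemma ex9: "r\<in>S L (Suc n) \<Longrightarrow> s\<in>S L n \<Longrightarrow>
  ex L n (meet L (Suc n) r (sub L n (Suc n) (cyl n) s)) = meet L n (ex L n r) s"
  using a9 unfolding ax9_def by blast

lemma exsS[simp]: "x \<in> S L (m+k) \<Longrightarrow> exs L m k x \<in> S L m"
  by (induction k arbitrary: x) auto
lemma exs_zero: "exs L m k (zero L (m+k)) = zero L m"
  by (induction k) (auto simp: ex_zero)
lemma exs_join: "x \<in> S L (m+k) \<Longrightarrow> y \<in> S L (m+k) \<Longrightarrow>
   exs L m k (join L (m+k) x y) = join L m (exs L m k x) (exs L m k y)"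
  by (induction k arbitrary: x y) (auto simp: ex_join)
lemma exs_mono: "x \<in> S L (m+k) \<Longrightarrow> y \<in> S L (m+k) \<Longrightarrow> le L (m+k) x y \<Longrightarrow> le L m (exs L m k x) (exs L m k y)"
  by (metis exs_join exsS le_join_iff)

lemma exs_cyl: "1 \<le> k \<Longrightarrow> y \<in> S L (m+k) \<Longrightarrow> s \<in> S L m \<Longrightarrow>
  exs L m k (meet L (m+k) y (sub L m (m+k) (cyl m) s)) = meet L m (exs L m k y) s"
proof (induction k arbitrary: y rule: nat_induct_at_least)
  case base thus ?case using ex9[of y m s] by simp
next
  case (Suc k)
  have c: "sub L m (Suc (m+k)) (cyl m) s = sub L (m+k) (Suc (m+k)) (cyl (m+k)) (sub L m (m+k) (cyl m) s)"
  proof -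
    have "restrict (cyl (m+k) \<circ> cyl m) {1..m} = cyl m" unfolding cyl_def by (auto simp: fun_eq_iff)
    thus ?thesis using sub_comp[of "cyl m" m "m+k" "cyl (m+k)" "Suc (m+k)" s] cyl_substs Suc by simp
  qed
  have "exs L m (Suc k) (meet L (m + Suc k) y (sub L m (m + Suc k) (cyl m) s))
     = exs L m k (ex L (m+k) (meet L (Suc (m+k)) y (sub L (m+k) (Suc (m+k)) (cyl (m+k)) (sub L m (m+k) (cyl m) s))))"
    using c by simp
  also have "\<dots> = exs L m k (meet L (m+k) (ex L (m+k) y) (sub L m (m+k) (cyl m) s))"
    using ex9 Suc cyl_substs by simp
  also have "\<dots> = meet L m (exs L m (Suc k) y) s" using Suc by simp
  finally show ?case .
qed

lemma bigmeetS[simp]: "(\<And>i. i\<in>{1..k} \<Longrightarrow> f i \<in> S L n) \<Longrightarrow> bigmeet L n k f \<in> S L n"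
  by (induction k) auto
lemma bigmeet_le: "(\<And>i. i\<in>{1..k} \<Longrightarrow> f i \<in> S L n) \<Longrightarrow> i\<in>{1..k} \<Longrightarrow> le L n (bigmeet L n k f) (f i)"
proof (induction k)
  case 0 thus ?case by simp
next
  case (Suc k)
  show ?case
  proof (cases "i = Suc k")
    case True
    have "bigmeet L n k f \<in> S L n" by (rule bigmeetS) (use Suc.prems in auto)
    thus ?thesis using True Suc.prems by (simp add: le_m2)
  next
    case False
    hence "i \<in> {1..k}" using Suc.prems by auto
    hence "le L n (bigmeet L n k f) (f i)" using Suc by auto
    moreover have "bigmeet L n k f \<in> S L n" by (rule bigmeetS) (use Suc.prems in auto)
    ultimately show ?thesis using Suc.prems \<open>i\<in>{1..k}\<close> le_trans[OF _ _ _ le_m1[of "bigmeet L n k f" n "f (Suc k)"]]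
      by auto
  qed
qed
lemma bigmeet_mono: "(\<And>i. i\<in>{1..k} \<Longrightarrow> f i \<in> S L n) \<Longrightarrow> (\<And>i. i\<in>{1..k} \<Longrightarrow> g i \<in> S L n) \<Longrightarrow>
  (\<And>i. i\<in>{1..k} \<Longrightarrow> le L n (f i) (g i)) \<Longrightarrow> le L n (bigmeet L n k f) (bigmeet L n k g)"
proof (induction k)
  case 0 thus ?case by (simp add: le_refl)
next
  case (Suc k)
  have "bigmeet L n k f \<in> S L n" "bigmeet L n k g \<in> S L n" by (rule bigmeetS, use Suc.prems in auto)+
  thus ?case using Suc by (auto intro!: le_mmono)
qed

end



definition pos :: "nat list \<Rightarrow> nat \<Rightarrow> nat" where
  "pos ys = restrict (\<lambda>j. ys ! (j - 1)) {1..length ys}"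

lemma substs_app: "\<alpha> \<in> substs n k \<Longrightarrow> j \<in> {1..n} \<Longrightarrow> \<alpha> j \<in> {1..k}"
  unfolding substs_def by (rule PiE_mem)

lemma pos_substs: "set ys \<subseteq> {1..N} \<Longrightarrow> pos ys \<in> substs (length ys) N"
  unfolding pos_def substs_def restrict_PiE_iff
proof
  fix x assume "set ys \<subseteq> {1..N}" "x \<in> {1..length ys}"
  hence "ys ! (x - 1) \<in> set ys" by auto
  thus "ys ! (x - 1) \<in> {1..N}" using \<open>set ys \<subseteq> {1..N}\<close> by blast
qed

context pe begin

lemma ex10_one:
  assumes al: "\<alpha> \<in> substs k m" and r: "r \<in> S L (Suc k)"
  shows "ex L m (sub L (Suc k) (Suc m) (restrict (\<lambda>j. if j \<le> k then \<alpha> j else Suc m) {1..Suc k}) r)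
   = sub L k m \<alpha> (ex L k r)"
proof -
  define \<beta> where "\<beta> = restrict (\<lambda>j. if j \<le> k then \<alpha> j else Suc m) {1..Suc k}"
  have H0: "exs L m 1 (bigmeet L (m + 1) 1 (\<lambda>i.
          sub L (Suc k) (m + 1)
              (restrict (\<lambda>j. if j \<le> k then \<alpha> j else m + i) {1..Suc k}) r))
      = bigmeet L m 1 (\<lambda>i. sub L k m \<alpha> (ex L k r))"
    using a10[unfolded ax10_def, rule_format, of 1 "\<lambda>_. \<alpha>" "\<lambda>_. k" m "\<lambda>_. r"] al r by blast
  have e: "(\<lambda>i. sub L (Suc k) (m + 1) (restrict (\<lambda>j. if j \<le> k then \<alpha> j else m + i) {1..Suc k}) r) 1
      = sub L (Suc k) (Suc m) \<beta> r"
    unfolding \<beta>_def by (simp only: Suc_eq_plus1)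
  have bS: "\<beta> \<in> substs (Suc k) (Suc m)"
    using substs_app[OF al] unfolding substs_def \<beta>_def by fastforce
  have bm: "bigmeet L n 1 F = meet L n (one L n) (F 1)" for n F by simp
  have 3: "exs L m 1 x = ex L m x" for x by simp
  have e': "sub L (Suc k) (m + 1) (restrict (\<lambda>j. if j \<le> k then \<alpha> j else m + 1) {1..Suc k}) r
      = sub L (Suc k) (Suc m) \<beta> r"
    unfolding \<beta>_def by (simp only: Suc_eq_plus1)
  have H1: "ex L m (meet L (m+1) (one L (m+1)) (sub L (Suc k) (Suc m) \<beta> r)) = meet L m (one L m) (sub L k m \<alpha> (ex L k r))"
    using H0 unfolding bm 3 e' .
  show ?thesis using H1 bS r al unfolding \<beta>_def[symmetric] by (simp add: mone)
qed

lemma fm_ex: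
  assumes Qup: "\<And>x y. x \<in> Q \<Longrightarrow> y \<in> S L N \<Longrightarrow> le L N x y \<Longrightarrow> y \<in> Q"
    and xs: "set (xs @ [y]) \<subseteq> {1..N}" and r: "r \<in> S L (Suc (length xs))"
    and h: "sub L (Suc (length xs)) N (pos (xs @ [y])) r \<in> Q"
  shows "sub L (length xs) N (pos xs) (ex L (length xs) r) \<in> Q"
proof -
  let ?n = "length xs"
  define \<beta> where "\<beta> = restrict (\<lambda>j. if j \<le> ?n then pos xs j else Suc N) {1..Suc ?n}"
  define \<gamma> where "\<gamma> = restrict (\<lambda>j. if j \<le> N then j else y) {1..Suc N}"
  have px: "pos xs \<in> substs ?n N" using xs by (intro pos_substs) auto
  have y: "y \<in> {1..N}" using xs by auto
  have b: "\<beta> \<in> substs (Suc ?n) (Suc N)" using substs_app[OF px] unfolding \<beta>_def substs_def by fastforce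
  have g: "\<gamma> \<in> substs (Suc N) N" using y unfolding \<gamma>_def substs_def by auto
  have xsN: "xs ! (j - 1) \<in> {1..N}" if "j \<in> {1..?n}" for j
  proof -
    have "xs ! (j - 1) \<in> set xs" using that by auto
    thus ?thesis using xs by auto
  qed
  have gb: "restrict (\<gamma> \<circ> \<beta>) {1..Suc ?n} = pos (xs @ [y])"
  proof
    fix x show "restrict (\<gamma> \<circ> \<beta>) {1..Suc ?n} x = pos (xs @ [y]) x"
    proof (cases "x \<in> {1..?n}")
      case True
      thus ?thesis using xsN[OF True] unfolding \<beta>_def \<gamma>_def pos_def by (auto simp: nth_append)
    next
      case False
      thus ?thesis using y unfolding \<beta>_def \<gamma>_def pos_def by (auto simp: nth_append)
    qed
  qed
  define t where "t = sub L (Suc ?n) (Suc N) \<beta> r"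
  have tS: "t \<in> S L (Suc N)" using b r t_def by simp
  have 1: "sub L (Suc ?n) N (pos (xs @ [y])) r = sub L (Suc N) N \<gamma> t"
    using sub_comp[OF b g r] gb t_def by simp
  have et: "ex L N t = sub L ?n N (pos xs) (ex L ?n r)"
    using ex10_one[OF px r] unfolding t_def \<beta>_def by simp
  have cS: "cyl N \<in> substs N (Suc N)" "cyl N \<in> substs N N" by (auto intro: cyl_substs)
  have 2: "le L N (sub L (Suc N) N \<gamma> t) (sub L (Suc N) N \<gamma> (sub L N (Suc N) (cyl N) (ex L N t)))"
    using sub_mono[OF g tS _ ex8[OF tS]] cS tS by simp
  have gc: "restrict (\<gamma> \<circ> cyl N) {1..N} = cyl N" unfolding \<gamma>_def cyl_def by (auto simp: fun_eq_iff)
  have 3: "sub L (Suc N) N \<gamma> (sub L N (Suc N) (cyl N) (ex L N t)) = sub L N N (cyl N) (ex L N t)"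
    using sub_comp[OF cS(1) g, of "ex L N t"] gc tS by simp
  have cp: "restrict (cyl N \<circ> pos xs) {1..?n} = pos xs" using px unfolding cyl_def pos_def substs_def
    by (auto simp: fun_eq_iff PiE_iff)
  have 4: "sub L N N (cyl N) (ex L N t) = ex L N t"
    using sub_comp[OF px cS(2), of "ex L ?n r"] cp r et by simp
  show ?thesis using Qup[OF h] 1 2 3 4 et px r by (metis exS subS)
qed

lemma P_bigmeet:
  assumes Pone: "P (one L m)" and Pmeet: "\<And>x y. x\<in>S L m \<Longrightarrow> y\<in>S L m \<Longrightarrow> P (meet L m x y) \<longleftrightarrow> P x \<and> P y"
    and f: "\<And>i. i\<in>{1..k} \<Longrightarrow> f i \<in> S L m \<and> P (f i)"
  shows "P (bigmeet L m k f)"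
  using f
proof (induction k)
  case 0 thus ?case using Pone by simp
next
  case (Suc k)
  have "bigmeet L m k f \<in> S L m" by (rule bigmeetS) (use Suc.prems in auto)
  thus ?case using Suc Pmeet by auto
qed

lemma Qexists:
  fixes P :: "'e \<Rightarrow> bool" and G :: "nat \<Rightarrow> 'e set" and kk :: "nat \<Rightarrow> nat" and \<alpha> :: "nat \<Rightarrow> nat \<Rightarrow> nat"
  assumes k: "1 \<le> k"
    and P0: "\<not> P (zero L m)" and P1: "P (one L m)"
    and Pj: "\<And>x y. x\<in>S L m \<Longrightarrow> y\<in>S L m \<Longrightarrow> P (join L m x y) \<longleftrightarrow> P x \<or> P y"
    and Pm: "\<And>x y. x\<in>S L m \<Longrightarrow> y\<in>S L m \<Longrightarrow> P (meet L m x y) \<longleftrightarrow> P x \<and> P y"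
    and GS: "\<And>i. i\<in>{1..k} \<Longrightarrow> G i \<subseteq> S L (Suc (kk i))"
    and G1: "\<And>i. i\<in>{1..k} \<Longrightarrow> one L (Suc (kk i)) \<in> G i"
    and Gm: "\<And>i x y. i\<in>{1..k} \<Longrightarrow> x \<in> G i \<Longrightarrow> y \<in> G i \<Longrightarrow> meet L (Suc (kk i)) x y \<in> G i"
    and al: "\<And>i. i\<in>{1..k} \<Longrightarrow> \<alpha> i \<in> substs (kk i) m"
    and GP: "\<And>i r. i\<in>{1..k} \<Longrightarrow> r \<in> G i \<Longrightarrow> P (sub L (kk i) m (\<alpha> i) (ex L (kk i) r))"
  shows "\<exists>Q. prime_filter L (m+k) Q \<and>
     (\<forall>i\<in>{1..k}. \<forall>r\<in>G i. sub L (Suc (kk i)) (m+k)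
          (restrict (\<lambda>j. if j \<le> kk i then \<alpha> i j else m + i) {1..Suc (kk i)}) r \<in> Q) \<and>
     (\<forall>s\<in>S L m. sub L m (m+k) (cyl m) s \<in> Q \<longleftrightarrow> P s)"
proof -
  let ?N = "m + k"
  define \<beta> where "\<beta> i = restrict (\<lambda>j. if j \<le> kk i then \<alpha> i j else m + i) {1..Suc (kk i)}" for i
  have bS: "\<beta> i \<in> substs (Suc (kk i)) ?N" if "i\<in>{1..k}" for i
    using substs_app[OF al[OF that]] that unfolding \<beta>_def substs_def by fastforce
  have cS: "cyl m \<in> substs m ?N" by (rule cyl_substs) simp
  have Pup: "P y" if "x\<in>S L m" "y\<in>S L m" "le L m x y" "P x" for x y
    using that Pm unfolding le_def by metis
  define X where "X r s = meet L ?N (bigmeet L ?N k (\<lambda>i. sub L (Suc (kk i)) ?N (\<beta> i) (r i))) (sub L m ?N (cyl m) s)" for r s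
  define good where "good r s \<longleftrightarrow> (\<forall>i\<in>{1..k}. r i \<in> G i) \<and> s \<in> S L m \<and> P s" for r s
  have bmS: "bigmeet L ?N k (\<lambda>i. sub L (Suc (kk i)) ?N (\<beta> i) (r i)) \<in> S L ?N" if "good r s" for r s
  proof (rule bigmeetS)
    fix i assume i: "i \<in> {1..k}"
    hence "r i \<in> S L (Suc (kk i))" using that GS unfolding good_def by blast
    thus "sub L (Suc (kk i)) ?N (\<beta> i) (r i) \<in> S L ?N" using bS[OF i] by simp
  qed
  have XS: "X r s \<in> S L ?N" if "good r s" for r s
    using bmS[OF that] cS that unfolding X_def good_def by (intro mS subS) auto
  define F0 where "F0 = {y\<in>S L ?N. \<exists>r s. good r s \<and> le L ?N (X r s) y}"
  define \<phi> where "\<phi> y \<longleftrightarrow> P (exs L m k y)" for y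
  have phiX: "\<phi> (X r s)" if "good r s" for r s
  proof -
    have "exs L m k (X r s) = meet L m (exs L m k (bigmeet L ?N k (\<lambda>i. sub L (Suc (kk i)) ?N (\<beta> i) (r i)))) s"
      unfolding X_def using exs_cyl k bmS[OF that] that by (simp add: good_def)
    also have "exs L m k (bigmeet L ?N k (\<lambda>i. sub L (Suc (kk i)) ?N (\<beta> i) (r i)))
        = bigmeet L m k (\<lambda>i. sub L (kk i) m (\<alpha> i) (ex L (kk i) (r i)))"
      unfolding \<beta>_def using that GS al
    proof (intro a10[unfolded ax10_def, rule_format] conjI)
      fix i assume i: "i \<in> {1..k}"
      show "\<alpha> i \<in> substs (kk i) m" using al i by blast
      show "r i \<in> S L (Suc (kk i))" using that GS i unfolding good_def by blast
    qed
    finally have e: "exs L m k (X r s) = meet L m (bigmeet L m k (\<lambda>i. sub L (kk i) m (\<alpha> i) (ex L (kk i) (r i)))) s" .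
    have r: "r i \<in> S L (Suc (kk i))" if "i\<in>{1..k}" for i using \<open>good r s\<close> GS that unfolding good_def by blast
    have "P (bigmeet L m k (\<lambda>i. sub L (kk i) m (\<alpha> i) (ex L (kk i) (r i))))"
      by (rule P_bigmeet[OF P1 Pm]) (use r al GP \<open>good r s\<close> in \<open>auto simp: good_def\<close>)
    moreover have "bigmeet L m k (\<lambda>i. sub L (kk i) m (\<alpha> i) (ex L (kk i) (r i))) \<in> S L m"
      by (rule bigmeetS) (use r al in auto)
    ultimately show ?thesis unfolding \<phi>_def e using \<open>good r s\<close> Pm by (auto simp: good_def)
  qed
  have good_one: "good (\<lambda>i. one L (Suc (kk i))) (one L m)"
    unfolding good_def using G1 P1 by auto
  have gf: "gfilt (S L ?N) (meet L ?N) F0" unfolding gfilt_def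
  proof (intro conjI ballI impI)
    show "F0 \<subseteq> S L ?N" unfolding F0_def by blast
    fix x y assume "x \<in> F0" "y \<in> S L ?N" "meet L ?N x y = x"
    then obtain r s where "good r s" "le L ?N (X r s) x" "x \<in> S L ?N" unfolding F0_def by blast
    moreover have "le L ?N x y" using \<open>meet L ?N x y = x\<close> unfolding le_def by (rule sym)
    ultimately have "le L ?N (X r s) y" using le_trans XS \<open>y \<in> S L ?N\<close> by blast
    thus "y \<in> F0" using \<open>good r s\<close> \<open>y \<in> S L ?N\<close> unfolding F0_def by blast
  next
    fix x y assume "x \<in> F0" "y \<in> F0"
    then obtain r s r' s' where g: "good r s" "le L ?N (X r s) x" "x \<in> S L ?N"
       "good r' s'" "le L ?N (X r' s') y" "y \<in> S L ?N" unfolding F0_def by blast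
    define r'' where "r'' i = meet L (Suc (kk i)) (r i) (r' i)" for i
    have g'': "good r'' (meet L m s s')" using g Gm Pm unfolding good_def r''_def by auto
    have rS: "r i \<in> S L (Suc (kk i))" "r' i \<in> S L (Suc (kk i))" if "i\<in>{1..k}" for i
      using g GS that unfolding good_def by blast+
    have sS: "s \<in> S L m" "s' \<in> S L m" using g unfolding good_def by auto
    have r''S: "r'' i \<in> S L (Suc (kk i))" if "i\<in>{1..k}" for i using rS[OF that] unfolding r''_def by simp
    have ms: "meet L m s s' \<in> S L m" using sS by simp
    have bm1: "le L ?N (bigmeet L ?N k (\<lambda>i. sub L (Suc (kk i)) ?N (\<beta> i) (r'' i)))
                       (bigmeet L ?N k (\<lambda>i. sub L (Suc (kk i)) ?N (\<beta> i) (r i)))"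
    proof (rule bigmeet_mono)
      fix i assume i: "i\<in>{1..k}"
      show "sub L (Suc (kk i)) ?N (\<beta> i) (r'' i) \<in> S L ?N" using r''S[OF i] bS[OF i] by simp
      show "sub L (Suc (kk i)) ?N (\<beta> i) (r i) \<in> S L ?N" using rS[OF i] bS[OF i] by simp
      show "le L ?N (sub L (Suc (kk i)) ?N (\<beta> i) (r'' i)) (sub L (Suc (kk i)) ?N (\<beta> i) (r i))"
        using sub_mono[OF bS[OF i] r''S[OF i] rS(1)[OF i]] le_m1[OF rS[OF i]] unfolding r''_def by blast
    qed
    have bm2: "le L ?N (bigmeet L ?N k (\<lambda>i. sub L (Suc (kk i)) ?N (\<beta> i) (r'' i)))
                       (bigmeet L ?N k (\<lambda>i. sub L (Suc (kk i)) ?N (\<beta> i) (r' i)))"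
    proof (rule bigmeet_mono)
      fix i assume i: "i\<in>{1..k}"
      show "sub L (Suc (kk i)) ?N (\<beta> i) (r'' i) \<in> S L ?N" using r''S[OF i] bS[OF i] by simp
      show "sub L (Suc (kk i)) ?N (\<beta> i) (r' i) \<in> S L ?N" using rS[OF i] bS[OF i] by simp
      show "le L ?N (sub L (Suc (kk i)) ?N (\<beta> i) (r'' i)) (sub L (Suc (kk i)) ?N (\<beta> i) (r' i))"
        using sub_mono[OF bS[OF i] r''S[OF i] rS(2)[OF i]] le_m2[OF rS[OF i]] unfolding r''_def by blast
    qed
    have c1: "le L ?N (sub L m ?N (cyl m) (meet L m s s')) (sub L m ?N (cyl m) s)"
      using sub_mono[OF cS ms sS(1)] le_m1[OF sS] by blast
    have c2: "le L ?N (sub L m ?N (cyl m) (meet L m s s')) (sub L m ?N (cyl m) s')"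
      using sub_mono[OF cS ms sS(2)] le_m2[OF sS] by blast
    have l1: "le L ?N (X r'' (meet L m s s')) (X r s)" unfolding X_def
      by (rule le_mmono[OF bmS[OF g''] _ _ _ bm1 c1]) (use bmS[OF g(1)] cS ms sS in auto)
    have l2: "le L ?N (X r'' (meet L m s s')) (X r' s')" unfolding X_def
      by (rule le_mmono[OF bmS[OF g''] _ _ _ bm2 c2]) (use bmS[OF g(4)] cS ms sS in auto)
    have t1: "le L ?N (X r'' (meet L m s s')) x" by (rule le_trans[OF XS[OF g''] XS[OF g(1)] g(3) l1 g(2)])
    have t2: "le L ?N (X r'' (meet L m s s')) y" by (rule le_trans[OF XS[OF g''] XS[OF g(4)] g(6) l2 g(5)])
    have "le L ?N (X r'' (meet L m s s')) (meet L ?N x y)" by (rule le_glb[OF XS[OF g''] g(3) g(6) t1 t2])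
    thus "meet L ?N x y \<in> F0" using g'' g unfolding F0_def by auto
  qed
  have F0ne: "F0 \<noteq> {}"
  proof -
    have "le L ?N (X (\<lambda>i. one L (Suc (kk i))) (one L m)) (one L ?N)" by (rule le_one[OF XS[OF good_one]])
    hence "one L ?N \<in> F0" unfolding F0_def using good_one oS by blast
    thus ?thesis by blast
  qed
  have F0phi: "\<forall>x\<in>F0. \<phi> x"
  proof
    fix x assume "x \<in> F0"
    then obtain r s where g: "good r s" "le L ?N (X r s) x" "x \<in> S L ?N" unfolding F0_def by blast
    have "le L m (exs L m k (X r s)) (exs L m k x)" using exs_mono g XS by blast
    thus "\<phi> x" using phiX[OF g(1)] Pup g XS unfolding \<phi>_def by (meson exsS)
  qed
  obtain Q where Q: "F0 \<subseteq> Q" "gfilt (S L ?N) (meet L ?N) Q" "\<forall>x\<in>Q. \<phi> x"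
     "\<forall>x\<in>S L ?N. \<forall>y\<in>S L ?N. join L ?N x y \<in> Q \<longrightarrow> x \<in> Q \<or> y \<in> Q"
  proof -
    have "\<exists>Q. F0 \<subseteq> Q \<and> gfilt (S L ?N) (meet L ?N) Q \<and> (\<forall>x\<in>Q. \<phi> x) \<and>
             (\<forall>x\<in>S L ?N. \<forall>y\<in>S L ?N. join L ?N x y \<in> Q \<longrightarrow> x \<in> Q \<or> y \<in> Q)"
    proof (rule prime_ext[OF _ _ _ _ _ _ _ _ gf F0ne F0phi])
      show "\<And>x y. x \<in> S L ?N \<Longrightarrow> y \<in> S L ?N \<Longrightarrow> meet L ?N x y \<in> S L ?N" by simp
      show "\<And>x y. x \<in> S L ?N \<Longrightarrow> y \<in> S L ?N \<Longrightarrow> join L ?N x y \<in> S L ?N" by simp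
      show "\<And>x y z. x \<in> S L ?N \<Longrightarrow> y \<in> S L ?N \<Longrightarrow> z \<in> S L ?N \<Longrightarrow> meet L ?N (meet L ?N x y) z = meet L ?N x (meet L ?N y z)" by (rule massoc)
      show "\<And>x y. x \<in> S L ?N \<Longrightarrow> y \<in> S L ?N \<Longrightarrow> meet L ?N x y = meet L ?N y x" by (rule mcomm)
      show "\<And>x. x \<in> S L ?N \<Longrightarrow> meet L ?N x x = x" by (rule midem)
      show "\<And>x y z. x \<in> S L ?N \<Longrightarrow> y \<in> S L ?N \<Longrightarrow> z \<in> S L ?N \<Longrightarrow> meet L ?N x (join L ?N y z) = join L ?N (meet L ?N x y) (meet L ?N x z)" by (rule mdistr)
      fix x y assume xy: "x \<in> S L ?N" "y \<in> S L ?N"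
      { assume mxy: "meet L ?N x y = x" and "\<phi> x"
        have "le L ?N x y" unfolding le_def using mxy by (rule sym)
        hence "le L m (exs L m k x) (exs L m k y)" using exs_mono xy by blast
        thus "\<phi> y" using Pup[OF exsS[OF xy(1)] exsS[OF xy(2)]] \<open>\<phi> x\<close> unfolding \<phi>_def by blast }
      { assume "\<phi> (join L ?N x y)"
        hence "P (join L m (exs L m k x) (exs L m k y))" unfolding \<phi>_def using exs_join xy by simp
        thus "\<phi> x \<or> \<phi> y" unfolding \<phi>_def using Pj exsS xy by blast }
    qed
    thus ?thesis using that by blast
  qed
  have QS: "Q \<subseteq> S L ?N" and Qup: "\<And>x y. x\<in>Q \<Longrightarrow> y\<in>S L ?N \<Longrightarrow> le L ?N x y \<Longrightarrow> y \<in> Q"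
    and Qm: "\<And>x y. x\<in>Q \<Longrightarrow> y\<in>Q \<Longrightarrow> meet L ?N x y \<in> Q"
  proof -
    show "Q \<subseteq> S L ?N" using Q(2) unfolding gfilt_def by blast
    show "\<And>x y. x\<in>Q \<Longrightarrow> y\<in>S L ?N \<Longrightarrow> le L ?N x y \<Longrightarrow> y \<in> Q"
    proof -
      fix x y assume "x\<in>Q" "y\<in>S L ?N" "le L ?N x y"
      from \<open>le L ?N x y\<close> have "meet L ?N x y = x" unfolding le_def by (rule sym)
      thus "y \<in> Q" using Q(2) \<open>x\<in>Q\<close> \<open>y\<in>S L ?N\<close> unfolding gfilt_def by blast
    qed
    show "\<And>x y. x\<in>Q \<Longrightarrow> y\<in>Q \<Longrightarrow> meet L ?N x y \<in> Q"
      using Q(2) unfolding gfilt_def by blast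
  qed
  have "zero L ?N \<notin> Q" using Q(3) P0 exs_zero[of m k] unfolding \<phi>_def by metis
  hence pf: "prime_filter L ?N Q" unfolding prime_filter_def
  proof (intro conjI)
    show "Q \<subseteq> S L ?N" by (rule QS)
    show "Q \<noteq> {}" using F0ne Q(1) by blast
    show "Q \<noteq> S L ?N" using \<open>zero L ?N \<notin> Q\<close> zS by blast
    show "\<forall>x\<in>Q. \<forall>y\<in>S L ?N. le L ?N x y \<longrightarrow> y \<in> Q" using Qup by blast
    show "\<forall>x\<in>Q. \<forall>y\<in>Q. meet L ?N x y \<in> Q" using Qm by blast
    show "\<forall>x\<in>S L ?N. \<forall>y\<in>S L ?N. join L ?N x y \<in> Q \<longrightarrow> x \<in> Q \<or> y \<in> Q" by (rule Q(4))
  qed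
  have A: "\<forall>i\<in>{1..k}. \<forall>r\<in>G i. sub L (Suc (kk i)) ?N (\<beta> i) r \<in> Q"
  proof (intro ballI)
    fix i r assume i: "i\<in>{1..k}" and r: "r \<in> G i"
    define r' where "r' j = (if j = i then r else one L (Suc (kk j)))" for j
    have g: "good r' (one L m)" unfolding good_def r'_def using G1 r P1 by auto
    have rS: "r \<in> S L (Suc (kk i))" using GS i r by blast
    have r'S: "r' j \<in> S L (Suc (kk j))" if "j \<in> {1..k}" for j
      using g GS that unfolding good_def by blast
    have subS': "sub L (Suc (kk j)) ?N (\<beta> j) (r' j) \<in> S L ?N" if "j \<in> {1..k}" for j
      using subS[OF bS[OF that] r'S[OF that]] .
    have l1: "le L ?N (X r' (one L m)) (bigmeet L ?N k (\<lambda>i. sub L (Suc (kk i)) ?N (\<beta> i) (r' i)))"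
      unfolding X_def by (rule le_m1[OF bmS[OF g]]) (use cS in simp)
    have l2: "le L ?N (bigmeet L ?N k (\<lambda>i. sub L (Suc (kk i)) ?N (\<beta> i) (r' i))) (sub L (Suc (kk i)) ?N (\<beta> i) (r' i))"
      by (rule bigmeet_le[OF subS' i])
    have "le L ?N (X r' (one L m)) (sub L (Suc (kk i)) ?N (\<beta> i) (r' i))"
      by (rule le_trans[OF XS[OF g] bmS[OF g] subS'[OF i] l1 l2])
    hence "le L ?N (X r' (one L m)) (sub L (Suc (kk i)) ?N (\<beta> i) r)" unfolding r'_def by simp
    hence "sub L (Suc (kk i)) ?N (\<beta> i) r \<in> F0" unfolding F0_def using g subS[OF bS[OF i] rS] by blast
    thus "sub L (Suc (kk i)) ?N (\<beta> i) r \<in> Q" using Q(1) by blast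
  qed
  have B: "\<forall>s\<in>S L m. sub L m ?N (cyl m) s \<in> Q \<longleftrightarrow> P s"
  proof (intro ballI iffI)
    fix s assume s: "s \<in> S L m" and "sub L m ?N (cyl m) s \<in> Q"
    hence "\<phi> (sub L m ?N (cyl m) s)" using Q(3) by blast
    moreover have "exs L m k (sub L m ?N (cyl m) s) = meet L m (exs L m k (one L ?N)) s"
      using exs_cyl[OF k, where y="one L ?N" and s=s and m=m] s mone[of "sub L m ?N (cyl m) s" ?N] cS by simp
    ultimately have "P (meet L m (exs L m k (one L ?N)) s)" unfolding \<phi>_def by simp
    thus "P s" using Pm s by simp
  next
    fix s assume s: "s \<in> S L m" "P s"
    hence g: "good (\<lambda>i. one L (Suc (kk i))) s" unfolding good_def using G1 by auto
    have "le L ?N (X (\<lambda>i. one L (Suc (kk i))) s) (sub L m ?N (cyl m) s)"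
      unfolding X_def by (rule le_m2[OF bmS[OF g] subS[OF cS s(1)]])
    hence "sub L m ?N (cyl m) s \<in> F0" unfolding F0_def using g subS[OF cS s(1)] by blast
    thus "sub L m ?N (cyl m) s \<in> Q" using Q(1) by blast
  qed
  show ?thesis using pf A B unfolding \<beta>_def by blast
qed

end



lemma ultra_exists:
  fixes I :: "'i set" and fa :: "'i \<Rightarrow> 'a set" and fw :: "'i \<Rightarrow> 'b set"
  assumes fip: "\<And>A W. finite A \<Longrightarrow> A \<subseteq> A0 \<Longrightarrow> finite W \<Longrightarrow> W \<subseteq> W0 \<Longrightarrow> \<exists>i\<in>I. A \<subseteq> fa i \<and> W \<subseteq> fw i"
  shows "\<exists>U. U \<subseteq> Pow I \<and> {} \<notin> U \<and> (\<forall>X\<in>U. \<forall>Y. X \<subseteq> Y \<and> Y \<subseteq> I \<longrightarrow> Y \<in> U) \<and>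
     (\<forall>X\<in>U. \<forall>Y\<in>U. X \<inter> Y \<in> U) \<and> (\<forall>X Y. X \<subseteq> I \<longrightarrow> Y \<subseteq> I \<longrightarrow> X \<union> Y \<in> U \<longrightarrow> X \<in> U \<or> Y \<in> U) \<and>
     I \<in> U \<and> (\<forall>a\<in>A0. {i\<in>I. a \<in> fa i} \<in> U) \<and> (\<forall>w\<in>W0. {i\<in>I. w \<in> fw i} \<in> U)"
proof -
  define F0 where "F0 = {X \<in> Pow I. \<exists>A W. finite A \<and> A \<subseteq> A0 \<and> finite W \<and> W \<subseteq> W0 \<and> {i\<in>I. A \<subseteq> fa i \<and> W \<subseteq> fw i} \<subseteq> X}"
  have gf: "gfilt (Pow I) (\<inter>) F0" unfolding gfilt_def
  proof (intro conjI ballI impI)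
    show "F0 \<subseteq> Pow I" unfolding F0_def by blast
    fix X Y assume X: "X \<in> F0" and Y: "Y \<in> Pow I" and XY: "X \<inter> Y = X"
    have "X \<subseteq> Y" using XY by (metis Int_lower2)
    from X obtain A W where "finite A" "A \<subseteq> A0" "finite W" "W \<subseteq> W0" "{i\<in>I. A \<subseteq> fa i \<and> W \<subseteq> fw i} \<subseteq> X"
      unfolding F0_def by blast
    moreover have "{i\<in>I. A \<subseteq> fa i \<and> W \<subseteq> fw i} \<subseteq> Y" using calculation(5) \<open>X \<subseteq> Y\<close> by (rule subset_trans)
    ultimately show "Y \<in> F0" unfolding F0_def using Y by blast
  next
    fix X Y assume "X \<in> F0" "Y \<in> F0"
    then obtain A W A' W' where "finite A" "A \<subseteq> A0" "finite W" "W \<subseteq> W0" "{i\<in>I. A \<subseteq> fa i \<and> W \<subseteq> fw i} \<subseteq> X"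
      "finite A'" "A' \<subseteq> A0" "finite W'" "W' \<subseteq> W0" "{i\<in>I. A' \<subseteq> fa i \<and> W' \<subseteq> fw i} \<subseteq> Y" "X \<subseteq> I" "Y \<subseteq> I"
      unfolding F0_def by blast
    note h = this
    have s: "{i\<in>I. A \<union> A' \<subseteq> fa i \<and> W \<union> W' \<subseteq> fw i} \<subseteq> X \<inter> Y"
    proof
      fix i assume "i \<in> {i\<in>I. A \<union> A' \<subseteq> fa i \<and> W \<union> W' \<subseteq> fw i}"
      hence "i \<in> {i\<in>I. A \<subseteq> fa i \<and> W \<subseteq> fw i}" "i \<in> {i\<in>I. A' \<subseteq> fa i \<and> W' \<subseteq> fw i}" by auto
      thus "i \<in> X \<inter> Y" using h(5) h(10) by blast
    qed
    have "finite (A \<union> A')" "A \<union> A' \<subseteq> A0" "finite (W \<union> W')" "W \<union> W' \<subseteq> W0" "X \<inter> Y \<in> Pow I"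
      using h by auto
    thus "X \<inter> Y \<in> F0" unfolding F0_def using s by blast
  qed
  have IF: "I \<in> F0" unfolding F0_def by (intro CollectI conjI exI[of _ "{}"]) auto
  have ph: "\<forall>X\<in>F0. X \<noteq> {}"
  proof
    fix X assume "X \<in> F0"
    then obtain A W where "finite A" "A \<subseteq> A0" "finite W" "W \<subseteq> W0" "{i\<in>I. A \<subseteq> fa i \<and> W \<subseteq> fw i} \<subseteq> X"
      unfolding F0_def by blast
    moreover then obtain i where "i\<in>I" "A \<subseteq> fa i" "W \<subseteq> fw i" using fip by meson
    ultimately show "X \<noteq> {}" by blast
  qed
  obtain U where U: "F0 \<subseteq> U" "gfilt (Pow I) (\<inter>) U" "\<forall>x\<in>U. x \<noteq> {}"
    "\<forall>x\<in>Pow I. \<forall>y\<in>Pow I. x \<union> y \<in> U \<longrightarrow> x \<in> U \<or> y \<in> U"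
  proof -
    have "\<exists>Q. F0 \<subseteq> Q \<and> gfilt (Pow I) (\<inter>) Q \<and> (\<forall>x\<in>Q. x \<noteq> {}) \<and>
             (\<forall>x\<in>Pow I. \<forall>y\<in>Pow I. x \<union> y \<in> Q \<longrightarrow> x \<in> Q \<or> y \<in> Q)"
    proof (rule prime_ext[OF _ _ _ _ _ _ _ _ gf _ ph])
      show "F0 \<noteq> {}" using IF by blast
      show "\<And>x y. x \<in> Pow I \<Longrightarrow> y \<in> Pow I \<Longrightarrow> x \<inter> y \<in> Pow I" by blast
      show "\<And>x y. x \<in> Pow I \<Longrightarrow> y \<in> Pow I \<Longrightarrow> x \<union> y \<in> Pow I" by blast
      show "\<And>x y z. x \<inter> y \<inter> z = x \<inter> (y \<inter> z)" by (rule Int_assoc)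
      show "\<And>x y. x \<inter> y = y \<inter> x" by (rule Int_commute)
      show "\<And>x. x \<inter> x = x" by (rule Int_absorb)
      show "\<And>x y z. x \<inter> (y \<union> z) = x \<inter> y \<union> x \<inter> z" by (rule Int_Un_distrib)
      show "\<And>x y. x \<inter> y = x \<Longrightarrow> x \<noteq> {} \<Longrightarrow> y \<noteq> {}" by (metis Int_empty_right)
      show "\<And>x y. x \<union> y \<noteq> {} \<Longrightarrow> x \<noteq> {} \<or> y \<noteq> {}" by (metis Un_empty)
    qed
    thus ?thesis using that by blast
  qed
  show ?thesis
  proof (intro exI[of _ U] conjI)
    have gU: "U \<subseteq> Pow I" "\<forall>x\<in>U. \<forall>y\<in>Pow I. x \<inter> y = x \<longrightarrow> y \<in> U" "\<forall>x\<in>U. \<forall>y\<in>U. x \<inter> y \<in> U"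
      using U(2) unfolding gfilt_def by simp_all
    show "U \<subseteq> Pow I" by (rule gU(1))
    show "{} \<notin> U" using U(3) by metis
    show "\<forall>X\<in>U. \<forall>Y. X \<subseteq> Y \<and> Y \<subseteq> I \<longrightarrow> Y \<in> U"
    proof (intro ballI allI impI)
      fix X Y assume "X \<in> U" "X \<subseteq> Y \<and> Y \<subseteq> I"
      hence "X \<inter> Y = X" "Y \<in> Pow I" by auto
      thus "Y \<in> U" using gU(2) \<open>X \<in> U\<close> by metis
    qed
    show "\<forall>X\<in>U. \<forall>Y\<in>U. X \<inter> Y \<in> U" by (rule gU(3))
    show "\<forall>X Y. X \<subseteq> I \<longrightarrow> Y \<subseteq> I \<longrightarrow> X \<union> Y \<in> U \<longrightarrow> X \<in> U \<or> Y \<in> U"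
    proof (intro allI impI)
      fix X Y assume "X \<subseteq> I" "Y \<subseteq> I" "X \<union> Y \<in> U"
      moreover have "X \<in> Pow I" "Y \<in> Pow I" using calculation by auto
      ultimately show "X \<in> U \<or> Y \<in> U" using U(4) by metis
    qed
    show "I \<in> U" using IF U(1) by (rule subsetD[rotated])
    show "\<forall>a\<in>A0. {i\<in>I. a \<in> fa i} \<in> U"
    proof
      fix a assume "a \<in> A0"
      have H: "finite {a} \<and> {a} \<subseteq> A0 \<and> finite ({}::'b set) \<and> ({}::'b set) \<subseteq> W0 \<and>
          {i\<in>I. {a} \<subseteq> fa i \<and> {} \<subseteq> fw i} \<subseteq> {i\<in>I. a \<in> fa i}" using \<open>a \<in> A0\<close> by auto
      have "\<exists>A W. finite A \<and> A \<subseteq> A0 \<and> finite W \<and> W \<subseteq> W0 \<and> {i\<in>I. A \<subseteq> fa i \<and> W \<subseteq> fw i} \<subseteq> {i\<in>I. a \<in> fa i}"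
        by (rule exI[where x="{a}"], rule exI[where x="{}"], rule H)
      hence "{i\<in>I. a \<in> fa i} \<in> F0" unfolding F0_def by blast
      thus "{i\<in>I. a \<in> fa i} \<in> U" using U(1) by blast
    qed
    show "\<forall>w\<in>W0. {i\<in>I. w \<in> fw i} \<in> U"
    proof
      fix w assume "w \<in> W0"
      have H: "finite ({}::'a set) \<and> ({}::'a set) \<subseteq> A0 \<and> finite {w} \<and> {w} \<subseteq> W0 \<and>
          {i\<in>I. {} \<subseteq> fa i \<and> {w} \<subseteq> fw i} \<subseteq> {i\<in>I. w \<in> fw i}" using \<open>w \<in> W0\<close> by auto
      have "\<exists>A W. finite A \<and> A \<subseteq> A0 \<and> finite W \<and> W \<subseteq> W0 \<and> {i\<in>I. A \<subseteq> fa i \<and> W \<subseteq> fw i} \<subseteq> {i\<in>I. w \<in> fw i}"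
        by (rule exI[where x="{}"], rule exI[where x="{w}"], rule H)
      hence "{i\<in>I. w \<in> fw i} \<in> F0" unfolding F0_def by blast
      thus "{i\<in>I. w \<in> fw i} \<in> U" using U(1) by blast
    qed
  qed
qed




definition idx :: "'a list \<Rightarrow> 'a \<Rightarrow> nat" where
  "idx xs a = (LEAST j. j < length xs \<and> xs ! j = a)"

lemma idx: "a \<in> set xs \<Longrightarrow> idx xs a < length xs \<and> xs ! idx xs a = a"
  unfolding idx_def by (rule LeastI_ex) (simp add: in_set_conv_nth)

definition posa :: "'a list \<Rightarrow> 'a \<Rightarrow> nat" where
  "posa as0 a = (if a \<in> set as0 then Suc (idx as0 a) else 1)"

lemma posa_range: "as0 \<noteq> [] \<Longrightarrow> posa as0 a \<in> {1..length as0}"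
  unfolding posa_def using idx[of a as0] by (auto simp: Suc_le_eq)

lemma posa_set: assumes "as0 \<noteq> []" shows "set (map (posa as0) bs) \<subseteq> {1..length as0}"
  using posa_range[OF assms] by auto

lemma length_tup[simp]: "length (tup n \<alpha> xs) = n" by (simp add: tup_def del: upt_Suc)
lemma nth_tup: "j < n \<Longrightarrow> tup n \<alpha> xs ! j = xs ! (\<alpha> (Suc j) - 1)" by (simp add: tup_def del: upt_Suc)

lemma tup_posa:
  assumes "set bs \<subseteq> set as0"
  shows "tup (length bs) (pos (map (posa as0) bs)) as0 = bs"
proof (rule nth_equalityI)
  show "length (tup (length bs) (pos (map (posa as0) bs)) as0) = length bs" by simp
  fix j assume "j < length (tup (length bs) (pos (map (posa as0) bs)) as0)"
  hence j: "j < length bs" by simp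
  have b: "bs ! j \<in> set as0" using assms j by auto
  have "tup (length bs) (pos (map (posa as0) bs)) as0 ! j = as0 ! (pos (map (posa as0) bs) (Suc j) - 1)"
    using j by (rule nth_tup)
  also have "pos (map (posa as0) bs) (Suc j) = posa as0 (bs ! j)" unfolding pos_def using j by simp
  also have "as0 ! (posa as0 (bs ! j) - 1) = bs ! j" unfolding posa_def using b idx[OF b] by simp
  finally show "tup (length bs) (pos (map (posa as0) bs)) as0 ! j = bs ! j" .
qed

lemma pos_tup:
  assumes "\<alpha> \<in> substs n (length ys)"
  shows "pos (tup n \<alpha> ys) = restrict (pos ys \<circ> \<alpha>) {1..n}"
proof
  fix j show "pos (tup n \<alpha> ys) j = restrict (pos ys \<circ> \<alpha>) {1..n} j"
  proof (cases "j \<in> {1..n}")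
    case True
    have a: "\<alpha> j \<in> {1..length ys}" using substs_app[OF assms True] .
    have j1: "j - 1 < n" "Suc (j - 1) = j" using True by auto
    have "tup n \<alpha> ys ! (j - 1) = ys ! (\<alpha> j - 1)"
      using nth_tup[OF j1(1), of \<alpha> ys] unfolding j1(2) .
    thus ?thesis using True a unfolding pos_def by simp
  next
    case False thus ?thesis unfolding pos_def by auto
  qed
qed

lemma tup_map:
  assumes "\<alpha> \<in> substs n (length xs)"
  shows "map f (tup n \<alpha> xs) = tup n \<alpha> (map f xs)"
proof -
  have "\<alpha> j - 1 < length xs" if "j \<in> set [1..<Suc n]" for j
    using substs_app[OF assms, of j] that by auto
  thus ?thesis unfolding tup_def by simp
qed

lemma pos_snoc:
  assumes "set xs \<subseteq> {1..m}"
  shows "pos (xs @ [y]) = restrict (\<lambda>j. if j \<le> length xs then pos xs j else y) {1..Suc (length xs)}"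
proof
  fix j show "pos (xs @ [y]) j = restrict (\<lambda>j. if j \<le> length xs then pos xs j else y) {1..Suc (length xs)} j"
    unfolding pos_def by (auto simp: nth_append)
qed

lemma cyl_pos:
  assumes "set xs \<subseteq> {1..m}"
  shows "restrict (cyl m \<circ> pos xs) {1..length xs} = pos xs"
proof
  fix j show "restrict (cyl m \<circ> pos xs) {1..length xs} j = pos xs j"
  proof (cases "j \<in> {1..length xs}")
    case True
    have "xs ! (j - 1) \<in> set xs" using True by auto
    hence "xs ! (j - 1) \<in> {1..m}" using assms by blast
    thus ?thesis using True unfolding pos_def cyl_def by simp
  next
    case False thus ?thesis unfolding pos_def by auto
  qed
qed

context pe begin

lemma pf_S: "prime_filter L n Q \<Longrightarrow> Q \<subseteq> S L n" unfolding prime_filter_def by blast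
lemma pf_up: "prime_filter L n Q \<Longrightarrow> x \<in> Q \<Longrightarrow> y \<in> S L n \<Longrightarrow> le L n x y \<Longrightarrow> y \<in> Q"
  unfolding prime_filter_def by blast
lemma pf_zero: "prime_filter L n Q \<Longrightarrow> zero L n \<notin> Q"
proof
  assume pf: "prime_filter L n Q" and z: "zero L n \<in> Q"
  have "S L n \<subseteq> Q" using pf_up[OF pf z] le_zero by blast
  thus False using pf unfolding prime_filter_def by blast
qed
lemma pf_one: "prime_filter L n Q \<Longrightarrow> one L n \<in> Q"
proof -
  assume pf: "prime_filter L n Q"
  then obtain x where "x \<in> Q" unfolding prime_filter_def by blast
  moreover have "x \<in> S L n" using calculation pf_S[OF pf] by blast
  ultimately show ?thesis using pf_up[OF pf _ oS le_one] by blast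
qed
lemma pf_meet: "prime_filter L n Q \<Longrightarrow> x \<in> S L n \<Longrightarrow> y \<in> S L n \<Longrightarrow> meet L n x y \<in> Q \<longleftrightarrow> x \<in> Q \<and> y \<in> Q"
proof -
  assume pf: "prime_filter L n Q" and xy: "x \<in> S L n" "y \<in> S L n"
  show ?thesis
  proof
    assume "meet L n x y \<in> Q"
    thus "x \<in> Q \<and> y \<in> Q" using pf_up[OF pf] le_m1[OF xy] le_m2[OF xy] xy by blast
  next
    assume "x \<in> Q \<and> y \<in> Q" thus "meet L n x y \<in> Q" using pf unfolding prime_filter_def by blast
  qed
qed
lemma pf_join: "prime_filter L n Q \<Longrightarrow> x \<in> S L n \<Longrightarrow> y \<in> S L n \<Longrightarrow> join L n x y \<in> Q \<longleftrightarrow> x \<in> Q \<or> y \<in> Q"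
proof -
  assume pf: "prime_filter L n Q" and xy: "x \<in> S L n" "y \<in> S L n"
  show ?thesis
  proof
    assume "join L n x y \<in> Q"
    thus "x \<in> Q \<or> y \<in> Q" using pf xy unfolding prime_filter_def by blast
  next
    have 1: "le L n x (join L n x y)" using le_j1[OF xy] .
    have 2: "le L n y (join L n x y)" using le_j1[OF xy(2,1)] jcomm[OF xy] by simp
    assume "x \<in> Q \<or> y \<in> Q" thus "join L n x y \<in> Q" using pf_up[OF pf] 1 2 xy jS by blast
  qed
qed

context fixes N Q ys assumes pf: "prime_filter L N Q" and ys: "set ys \<subseteq> {1..N}"
begin
lemma ps: "pos ys \<in> substs (length ys) N" by (rule pos_substs[OF ys])
lemma fm_zero: "sub L (length ys) N (pos ys) (zero L (length ys)) \<notin> Q"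
  using pf_zero[OF pf] sub_zero[OF ps] by simp
lemma fm_one: "sub L (length ys) N (pos ys) (one L (length ys)) \<in> Q"
  using pf_one[OF pf] sub_one[OF ps] by simp
lemma fm_join: "r \<in> S L (length ys) \<Longrightarrow> s \<in> S L (length ys) \<Longrightarrow>
  sub L (length ys) N (pos ys) (join L (length ys) r s) \<in> Q \<longleftrightarrow>
  sub L (length ys) N (pos ys) r \<in> Q \<or> sub L (length ys) N (pos ys) s \<in> Q"
  using pf_join[OF pf] sub_join[OF ps] ps by simp
lemma fm_meet: "r \<in> S L (length ys) \<Longrightarrow> s \<in> S L (length ys) \<Longrightarrow>
  sub L (length ys) N (pos ys) (meet L (length ys) r s) \<in> Q \<longleftrightarrow>
  sub L (length ys) N (pos ys) r \<in> Q \<and> sub L (length ys) N (pos ys) s \<in> Q"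
  using pf_meet[OF pf] sub_meet[OF ps] ps by simp
lemma fm_sub: "\<alpha> \<in> substs n (length ys) \<Longrightarrow> r \<in> S L n \<Longrightarrow>
  sub L (length ys) N (pos ys) (sub L n (length ys) \<alpha> r) \<in> Q \<longleftrightarrow>
  sub L (length (tup n \<alpha> ys)) N (pos (tup n \<alpha> ys)) r \<in> Q"
  using sub_comp[of \<alpha> n "length ys" "pos ys" N r] ps pos_tup[of \<alpha> n ys] by simp
end

end



locale pem = pe L for L :: "('e,'z) pe_alg_scheme" +
  fixes D1 :: "'m set" and R1 :: "'e \<Rightarrow> 'm list \<Rightarrow> bool"
  assumes am: "almost_morphic L D1 R1"
begin

lemma amP: "D1 \<noteq> {} \<and>
    (\<forall>n. \<forall>xs\<in>lists D1. length xs = n \<longrightarrow>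
        \<not> R1 (zero L n) xs \<and> R1 (one L n) xs \<and>
        (\<forall>r\<in>S L n. \<forall>s\<in>S L n.
           (R1 (join L n r s) xs \<longleftrightarrow> R1 r xs \<or> R1 s xs) \<and>
           (R1 (meet L n r s) xs \<longleftrightarrow> R1 r xs \<and> R1 s xs))) \<and>
    (\<forall>n k \<alpha>. \<alpha> \<in> substs n k \<longrightarrow> (\<forall>r\<in>S L n. \<forall>xs\<in>lists D1. length xs = k \<longrightarrow>
        (R1 (sub L n k \<alpha> r) xs \<longleftrightarrow> R1 r (tup n \<alpha> xs)))) \<and>
    (\<forall>n. \<forall>r\<in>S L (Suc n). \<forall>xs\<in>lists D1. \<forall>y\<in>D1. length xs = n \<longrightarrow>
        R1 r (xs @ [y]) \<longrightarrow> R1 (ex L n r) xs)"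
  using am unfolding almost_morphic_def .

lemma am_ne: "D1 \<noteq> {}" using amP by (rule conjunct1)
lemma am2: "xs \<in> lists D1 \<Longrightarrow> \<not> R1 (zero L (length xs)) xs \<and> R1 (one L (length xs)) xs \<and>
        (\<forall>r\<in>S L (length xs). \<forall>s\<in>S L (length xs).
           (R1 (join L (length xs) r s) xs \<longleftrightarrow> R1 r xs \<or> R1 s xs) \<and>
           (R1 (meet L (length xs) r s) xs \<longleftrightarrow> R1 r xs \<and> R1 s xs))"
  using conjunct1[OF conjunct2[OF amP], rule_format, OF _ refl] .
lemma am_zero: "xs \<in> lists D1 \<Longrightarrow> \<not> R1 (zero L (length xs)) xs"
  using am2 by (rule conjunct1)
lemma am_one: "xs \<in> lists D1 \<Longrightarrow> R1 (one L (length xs)) xs"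
  using am2 by (rule conjunct1[OF conjunct2])
lemma am_join: "xs \<in> lists D1 \<Longrightarrow> r \<in> S L (length xs) \<Longrightarrow> s \<in> S L (length xs) \<Longrightarrow>
   R1 (join L (length xs) r s) xs \<longleftrightarrow> R1 r xs \<or> R1 s xs"
  using am2[THEN conjunct2, THEN conjunct2] by blast
lemma am_meet: "xs \<in> lists D1 \<Longrightarrow> r \<in> S L (length xs) \<Longrightarrow> s \<in> S L (length xs) \<Longrightarrow>
   R1 (meet L (length xs) r s) xs \<longleftrightarrow> R1 r xs \<and> R1 s xs"
  using am2[THEN conjunct2, THEN conjunct2] by blast
lemma am_sub: "\<alpha> \<in> substs n k \<Longrightarrow> r \<in> S L n \<Longrightarrow> xs \<in> lists D1 \<Longrightarrow> length xs = k \<Longrightarrow>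
   R1 (sub L n k \<alpha> r) xs \<longleftrightarrow> R1 r (tup n \<alpha> xs)"
  using conjunct1[OF conjunct2[OF conjunct2[OF amP]], rule_format] .
lemma am_ex: "r \<in> S L (Suc n) \<Longrightarrow> xs \<in> lists D1 \<Longrightarrow> y \<in> D1 \<Longrightarrow> length xs = n \<Longrightarrow>
   R1 r (xs @ [y]) \<Longrightarrow> R1 (ex L n r) xs"
  using conjunct2[OF conjunct2[OF conjunct2[OF amP]], rule_format] .

definition vw :: "'m list \<times> 'e set \<Rightarrow> bool" where
  "vw w \<longleftrightarrow> prime_filter L (Suc (length (fst w))) (snd w) \<and> cyl_inv L (length (fst w)) (snd w) = ptype L R1 (fst w)"
definition effG :: "'m list \<times> 'e set \<Rightarrow> 'e set" where
  "effG w = (if vw w then snd w else {one L (Suc (length (fst w)))})"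
definition Iset :: "('m list \<times> ('m list \<times> 'e set) list) set" where
  "Iset = {i. fst i \<in> lists D1 \<and> fst i \<noteq> [] \<and> snd i \<noteq> [] \<and> (\<forall>w\<in>set (snd i). set (fst w) \<subseteq> set (fst i))}"
definition Nn :: "'m list \<times> ('m list \<times> 'e set) list \<Rightarrow> nat" where
  "Nn i = length (fst i) + length (snd i)"
definition wpos :: "'m list \<times> ('m list \<times> 'e set) list \<Rightarrow> 'm list \<times> 'e set \<Rightarrow> nat" where
  "wpos i w = length (fst i) + Suc (idx (snd i) w)"
definition goodQ :: "'m list \<times> ('m list \<times> 'e set) list \<Rightarrow> 'e set \<Rightarrow> bool" where
  "goodQ i Q \<longleftrightarrow> prime_filter L (Nn i) Q \<and>
    (\<forall>w\<in>set (snd i). \<forall>r\<in>effG w. sub L (Suc (length (fst w))) (Nn i)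
        (pos (map (posa (fst i)) (fst w) @ [wpos i w])) r \<in> Q) \<and>
    (\<forall>cs. set cs \<subseteq> set (fst i) \<longrightarrow> (\<forall>r\<in>S L (length cs).
        sub L (length cs) (Nn i) (pos (map (posa (fst i)) cs)) r \<in> Q \<longleftrightarrow> R1 r cs))"

lemma effG_props:
  assumes bs: "fst w \<in> lists D1"
  shows "effG w \<subseteq> S L (Suc (length (fst w)))" "one L (Suc (length (fst w))) \<in> effG w"
    "\<And>x y. x \<in> effG w \<Longrightarrow> y \<in> effG w \<Longrightarrow> meet L (Suc (length (fst w))) x y \<in> effG w"
    "\<And>r. r \<in> effG w \<Longrightarrow> R1 (ex L (length (fst w)) r) (fst w)"
proof -
  let ?n = "length (fst w)"
  show "effG w \<subseteq> S L (Suc ?n)"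
  proof (cases "vw w")
    case True
    hence "prime_filter L (Suc ?n) (snd w)" unfolding vw_def by blast
    thus ?thesis using pf_S True unfolding effG_def by simp
  next
    case False thus ?thesis unfolding effG_def by simp
  qed
  show "one L (Suc ?n) \<in> effG w"
  proof (cases "vw w")
    case True
    hence "prime_filter L (Suc ?n) (snd w)" unfolding vw_def by blast
    thus ?thesis using pf_one True unfolding effG_def by simp
  next
    case False thus ?thesis unfolding effG_def by simp
  qed
  show "\<And>x y. x \<in> effG w \<Longrightarrow> y \<in> effG w \<Longrightarrow> meet L (Suc ?n) x y \<in> effG w"
  proof -
    fix x y assume xy: "x \<in> effG w" "y \<in> effG w"
    show "meet L (Suc ?n) x y \<in> effG w"
    proof (cases "vw w")
      case True
      hence pf: "prime_filter L (Suc ?n) (snd w)" unfolding vw_def by blast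
      have "x \<in> snd w" "y \<in> snd w" using xy True unfolding effG_def by simp_all
      hence "meet L (Suc ?n) x y \<in> snd w" using pf unfolding prime_filter_def by blast
      thus ?thesis using True unfolding effG_def by simp
    next
      case False
      hence "x = one L (Suc ?n)" "y = one L (Suc ?n)" using xy unfolding effG_def by simp_all
      thus ?thesis using False unfolding effG_def by (simp add: midem)
    qed
  qed
  show "\<And>r. r \<in> effG w \<Longrightarrow> R1 (ex L ?n r) (fst w)"
  proof -
    fix r assume r: "r \<in> effG w"
    show "R1 (ex L ?n r) (fst w)"
    proof (cases "vw w")
      case True
      hence pf: "prime_filter L (Suc ?n) (snd w)" and ci: "cyl_inv L ?n (snd w) = ptype L R1 (fst w)"
        unfolding vw_def by auto
      have rG: "r \<in> snd w" using r True unfolding effG_def by simp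
      have rS: "r \<in> S L (Suc ?n)" using pf_S[OF pf] rG by blast
      have cS: "cyl ?n \<in> substs ?n (Suc ?n)" by (rule cyl_substs) simp
      have "sub L ?n (Suc ?n) (cyl ?n) (ex L ?n r) \<in> snd w"
        using pf_up[OF pf rG subS[OF cS exS[OF rS]] ex8[OF rS]] .
      hence "ex L ?n r \<in> cyl_inv L ?n (snd w)" unfolding cyl_inv_def using exS[OF rS] by blast
      thus ?thesis using ci unfolding ptype_def by blast
    next
      case False
      hence r1: "r = one L (Suc ?n)" using r unfolding effG_def by simp
      obtain a0 where a0: "a0 \<in> D1" using am_ne by blast
      have "R1 (one L (Suc ?n)) (fst w @ [a0])" using am_one[of "fst w @ [a0]"] bs a0 by simp
      thus ?thesis using am_ex[of "one L (Suc ?n)" ?n "fst w" a0] bs a0 r1 by simp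
    qed
  qed
qed

lemma Q_exists:
  assumes i: "i \<in> Iset"
  shows "\<exists>Q. goodQ i Q"
proof -
  obtain as0 ws where iw: "i = (as0, ws)" by (cases i)
  have as0: "as0 \<in> lists D1" "as0 \<noteq> []" and ws: "ws \<noteq> []"
    and wsub: "\<And>w. w \<in> set ws \<Longrightarrow> set (fst w) \<subseteq> set as0"
    using i unfolding Iset_def iw by auto
  let ?m = "length as0" and ?k = "length ws"
  define G where "G t = effG (ws ! (t - 1))" for t
  define kk where "kk t = length (fst (ws ! (t - 1)))" for t
  define \<alpha> where "\<alpha> t = pos (map (posa as0) (fst (ws ! (t - 1))))" for t
  have wt: "ws ! (t - 1) \<in> set ws" if "t \<in> {1..?k}" for t using that by auto
  have wD: "fst (ws ! (t - 1)) \<in> lists D1" if "t \<in> {1..?k}" for t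
    using wsub[OF wt[OF that]] as0(1) by auto
  have alS: "\<alpha> t \<in> substs (kk t) ?m" if "t \<in> {1..?k}" for t
    unfolding \<alpha>_def kk_def using pos_substs[OF posa_set[OF as0(2)]] by simp
  obtain Q where pf: "prime_filter L (?m + ?k) Q"
    and A: "\<forall>t\<in>{1..?k}. \<forall>r\<in>G t. sub L (Suc (kk t)) (?m + ?k)
          (restrict (\<lambda>j. if j \<le> kk t then \<alpha> t j else ?m + t) {1..Suc (kk t)}) r \<in> Q"
    and B: "\<forall>s\<in>S L ?m. sub L ?m (?m + ?k) (cyl ?m) s \<in> Q \<longleftrightarrow> R1 s as0"
  proof -
    have "\<exists>Q. prime_filter L (?m + ?k) Q \<and>
     (\<forall>t\<in>{1..?k}. \<forall>r\<in>G t. sub L (Suc (kk t)) (?m + ?k)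
          (restrict (\<lambda>j. if j \<le> kk t then \<alpha> t j else ?m + t) {1..Suc (kk t)}) r \<in> Q) \<and>
     (\<forall>s\<in>S L ?m. sub L ?m (?m + ?k) (cyl ?m) s \<in> Q \<longleftrightarrow> R1 s as0)"
    proof (rule Qexists)
      show "1 \<le> ?k" using ws by (cases ws) auto
      show "\<not> R1 (zero L ?m) as0" by (rule am_zero[OF as0(1)])
      show "R1 (one L ?m) as0" by (rule am_one[OF as0(1)])
      show "\<And>x y. x \<in> S L ?m \<Longrightarrow> y \<in> S L ?m \<Longrightarrow> R1 (join L ?m x y) as0 \<longleftrightarrow> R1 x as0 \<or> R1 y as0"
        by (rule am_join[OF as0(1)])
      show "\<And>x y. x \<in> S L ?m \<Longrightarrow> y \<in> S L ?m \<Longrightarrow> R1 (meet L ?m x y) as0 \<longleftrightarrow> R1 x as0 \<and> R1 y as0"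
        by (rule am_meet[OF as0(1)])
      show "\<And>t. t \<in> {1..?k} \<Longrightarrow> G t \<subseteq> S L (Suc (kk t))"
        unfolding G_def kk_def using effG_props(1)[OF wD] .
      show "\<And>t. t \<in> {1..?k} \<Longrightarrow> one L (Suc (kk t)) \<in> G t"
        unfolding G_def kk_def using effG_props(2)[OF wD] .
      show "\<And>t x y. t \<in> {1..?k} \<Longrightarrow> x \<in> G t \<Longrightarrow> y \<in> G t \<Longrightarrow> meet L (Suc (kk t)) x y \<in> G t"
        unfolding G_def kk_def using effG_props(3)[OF wD] .
      show "\<And>t. t \<in> {1..?k} \<Longrightarrow> \<alpha> t \<in> substs (kk t) ?m" by (rule alS)
      show "\<And>t r. t \<in> {1..?k} \<Longrightarrow> r \<in> G t \<Longrightarrow> R1 (sub L (kk t) ?m (\<alpha> t) (ex L (kk t) r)) as0"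
      proof -
        fix t r assume t: "t \<in> {1..?k}" and r: "r \<in> G t"
        have rS: "r \<in> S L (Suc (kk t))" using effG_props(1)[OF wD[OF t]] r unfolding G_def kk_def by blast
        have "R1 (sub L (kk t) ?m (\<alpha> t) (ex L (kk t) r)) as0 \<longleftrightarrow> R1 (ex L (kk t) r) (tup (kk t) (\<alpha> t) as0)"
          by (rule am_sub[OF alS[OF t] exS[OF rS] as0(1) refl])
        also have "tup (kk t) (\<alpha> t) as0 = fst (ws ! (t - 1))"
          unfolding kk_def \<alpha>_def by (rule tup_posa[OF wsub[OF wt[OF t]]])
        finally show "R1 (sub L (kk t) ?m (\<alpha> t) (ex L (kk t) r)) as0"
          using effG_props(4)[OF wD[OF t]] r unfolding G_def kk_def by blast
      qed
    qed
    thus ?thesis using that by blast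
  qed
  have "goodQ i Q" unfolding goodQ_def
  proof (intro conjI ballI allI impI)
    show "prime_filter L (Nn i) Q" using pf unfolding Nn_def iw by simp
  next
    fix w r assume w: "w \<in> set (snd i)" and r: "r \<in> effG w"
    hence w': "w \<in> set ws" using iw by simp
    define t where "t = Suc (idx ws w)"
    have t: "t \<in> {1..?k}" "ws ! (t - 1) = w" using idx[OF w'] unfolding t_def by auto
    have X: "sub L (Suc (kk t)) (?m + ?k) (restrict (\<lambda>j. if j \<le> kk t then \<alpha> t j else ?m + t) {1..Suc (kk t)}) r \<in> Q"
      using A t r unfolding G_def by auto
    have kt: "kk t = length (fst w)" "\<alpha> t = pos (map (posa as0) (fst w))"
      using t unfolding kk_def \<alpha>_def by simp_all
    have wp: "wpos i w = ?m + t" unfolding wpos_def iw t_def by simp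
    have PS: "pos (map (posa as0) (fst w) @ [?m + t]) = restrict (\<lambda>j. if j \<le> length (fst w) then pos (map (posa as0) (fst w)) j else ?m + t) {1..Suc (length (fst w))}"
      using pos_snoc[OF posa_set[OF as0(2)], of "fst w" "?m + t"] by (simp only: length_map)
    from X have "sub L (Suc (length (fst w))) (?m + ?k) (restrict (\<lambda>j. if j \<le> length (fst w) then pos (map (posa as0) (fst w)) j else ?m + t) {1..Suc (length (fst w))}) r \<in> Q"
      unfolding kt .
    hence "sub L (Suc (length (fst w))) (?m + ?k) (pos (map (posa as0) (fst w) @ [?m + t])) r \<in> Q"
      unfolding PS .
    thus "sub L (Suc (length (fst w))) (Nn i) (pos (map (posa (fst i)) (fst w) @ [wpos i w])) r \<in> Q"
      using wp[unfolded iw] by (simp add: Nn_def iw)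
  next
    fix cs r assume cs: "set cs \<subseteq> set (fst i)" and r: "r \<in> S L (length cs)"
    let ?p = "pos (map (posa as0) cs)"
    have p: "?p \<in> substs (length cs) ?m" using pos_substs[OF posa_set[OF as0(2)]] by simp
    have cm: "cyl ?m \<in> substs ?m (?m + ?k)" by (rule cyl_substs) simp
    have "sub L (length cs) (?m + ?k) ?p r = sub L ?m (?m + ?k) (cyl ?m) (sub L (length cs) ?m ?p r)"
      using sub_comp[OF p cm r] cyl_pos[OF posa_set[OF as0(2)], of cs] by simp
    hence "sub L (length cs) (?m + ?k) ?p r \<in> Q \<longleftrightarrow> R1 (sub L (length cs) ?m ?p r) as0"
      using B subS[OF p r] by simp
    also have "\<dots> \<longleftrightarrow> R1 r (tup (length cs) ?p as0)" by (rule am_sub[OF p r as0(1) refl])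
    also have "tup (length cs) ?p as0 = cs" using cs iw by (intro tup_posa) simp
    finally show "sub L (length cs) (Nn i) (pos (map (posa (fst i)) cs)) r \<in> Q \<longleftrightarrow> R1 r cs"
      unfolding Nn_def iw by simp
  qed
  thus ?thesis by blast
qed

end



context pem begin

lemma Iset_memI:
  assumes "fst i \<in> lists D1" "fst i \<noteq> []" "snd i \<noteq> []" "\<And>w. w \<in> set (snd i) \<Longrightarrow> set (fst w) \<subseteq> set (fst i)"
  shows "i \<in> Iset"
  using assms unfolding Iset_def by blast

lemma fip:
  assumes "finite A" "A \<subseteq> D1" "finite W" "W \<subseteq> lists D1 \<times> (UNIV :: 'e set set)"
  shows "\<exists>i\<in>Iset. A \<subseteq> set (fst i) \<and> W \<subseteq> set (snd i)"
proof -
  obtain a0 where a0: "a0 \<in> D1" using am_ne by blast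
  obtain la where la: "set la = A" using finite_list[OF assms(1)] by blast
  obtain lw where lw: "set lw = W" using finite_list[OF assms(3)] by blast
  define i where "i = (a0 # la @ concat (map fst lw), ([], {}) # lw)"
  have "i \<in> Iset"
  proof (rule Iset_memI)
    have "set (concat (map fst lw)) \<subseteq> D1" using lw assms(4) by auto
    thus "fst i \<in> lists D1" unfolding i_def using a0 la assms(2) by auto
    show "fst i \<noteq> []" "snd i \<noteq> []" unfolding i_def by simp_all
    fix w assume "w \<in> set (snd i)"
    thus "set (fst w) \<subseteq> set (fst i)" unfolding i_def by auto
  qed
  moreover have "A \<subseteq> set (fst i) \<and> W \<subseteq> set (snd i)" unfolding i_def using la lw by auto
  ultimately show ?thesis by blast
qed

lemma main:
  "\<exists>(D2 :: ('m + 'm list \<times> 'e set) set) R2.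
     almost_morphic L D2 R2 \<and> substructure L Inl D1 R1 D2 R2 \<and> has_witnesses L Inl D1 R1 D2 R2"
proof -
  define Qi where "Qi i = (SOME Q. goodQ i Q)" for i
  have gQ: "goodQ i (Qi i)" if "i \<in> Iset" for i
    unfolding Qi_def using Q_exists[OF that] by (rule someI_ex)
  have pfQ: "prime_filter L (Nn i) (Qi i)" if "i \<in> Iset" for i
    using gQ[OF that] unfolding goodQ_def by blast
  define hm :: "'m list \<times> ('m list \<times> 'e set) list \<Rightarrow> 'm + 'm list \<times> 'e set \<Rightarrow> nat" where
    "hm i x = (case x of Inl a \<Rightarrow> posa (fst i) a | Inr w \<Rightarrow> if w \<in> set (snd i) then wpos i w else 1)" for i x
  have hm_range: "hm i x \<in> {1..Nn i}" if "i \<in> Iset" for i x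
  proof (cases x)
    case (Inl a)
    have "fst i \<noteq> []" using that unfolding Iset_def by blast
    thus ?thesis using posa_range[of "fst i" a] Inl unfolding hm_def Nn_def by auto
  next
    case (Inr w)
    show ?thesis
    proof (cases "w \<in> set (snd i)")
      case True thus ?thesis using idx[OF True] Inr unfolding hm_def Nn_def wpos_def by auto
    next
      case False
      have "fst i \<noteq> []" using that unfolding Iset_def by blast
      thus ?thesis using False Inr unfolding hm_def Nn_def by (cases "fst i") auto
    qed
  qed
  have hm_set: "set (map (hm i) xs) \<subseteq> {1..Nn i}" if "i \<in> Iset" for i xs
    using hm_range[OF that] by auto
  define Rf where "Rf i r ys \<longleftrightarrow> sub L (length ys) (Nn i) (pos ys) r \<in> Qi i" for i r ys
  define Z where "Z r xs = {i\<in>Iset. Rf i r (map (hm i) xs)}" for r xs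
  have ZI: "Z r xs \<subseteq> Iset" for r xs unfolding Z_def by blast
  obtain U where U1: "U \<subseteq> Pow Iset" and U2: "{} \<notin> U"
    and U3: "\<forall>X\<in>U. \<forall>Y. X \<subseteq> Y \<and> Y \<subseteq> Iset \<longrightarrow> Y \<in> U"
    and U4: "\<forall>X\<in>U. \<forall>Y\<in>U. X \<inter> Y \<in> U"
    and U5: "\<forall>X Y. X \<subseteq> Iset \<longrightarrow> Y \<subseteq> Iset \<longrightarrow> X \<union> Y \<in> U \<longrightarrow> X \<in> U \<or> Y \<in> U"
    and U6: "Iset \<in> U"
    and U7: "\<forall>a\<in>D1. {i\<in>Iset. a \<in> set (fst i)} \<in> U"
    and U8: "\<forall>w\<in>lists D1 \<times> (UNIV :: 'e set set). {i\<in>Iset. w \<in> set (snd i)} \<in> U"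
  proof -
    have UE: "\<exists>U. U \<subseteq> Pow Iset \<and> {} \<notin> U \<and> (\<forall>X\<in>U. \<forall>Y. X \<subseteq> Y \<and> Y \<subseteq> Iset \<longrightarrow> Y \<in> U) \<and>
     (\<forall>X\<in>U. \<forall>Y\<in>U. X \<inter> Y \<in> U) \<and> (\<forall>X Y. X \<subseteq> Iset \<longrightarrow> Y \<subseteq> Iset \<longrightarrow> X \<union> Y \<in> U \<longrightarrow> X \<in> U \<or> Y \<in> U) \<and>
     Iset \<in> U \<and> (\<forall>a\<in>D1. {i\<in>Iset. a \<in> set (fst i)} \<in> U) \<and> (\<forall>w\<in>lists D1 \<times> (UNIV :: 'e set set). {i\<in>Iset. w \<in> set (snd i)} \<in> U)"
    proof (rule ultra_exists[of D1 "lists D1 \<times> (UNIV :: 'e set set)" Iset "\<lambda>i. set (fst i)" "\<lambda>i. set (snd i)"])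
      fix A W assume "finite A" "A \<subseteq> D1" "finite W" "W \<subseteq> lists D1 \<times> (UNIV :: 'e set set)"
      thus "\<exists>i\<in>Iset. A \<subseteq> set (fst i) \<and> W \<subseteq> set (snd i)" by (rule fip)
    qed
    from UE obtain U where "U \<subseteq> Pow Iset \<and> {} \<notin> U \<and> (\<forall>X\<in>U. \<forall>Y. X \<subseteq> Y \<and> Y \<subseteq> Iset \<longrightarrow> Y \<in> U) \<and>
     (\<forall>X\<in>U. \<forall>Y\<in>U. X \<inter> Y \<in> U) \<and> (\<forall>X Y. X \<subseteq> Iset \<longrightarrow> Y \<subseteq> Iset \<longrightarrow> X \<union> Y \<in> U \<longrightarrow> X \<in> U \<or> Y \<in> U) \<and>
     Iset \<in> U \<and> (\<forall>a\<in>D1. {i\<in>Iset. a \<in> set (fst i)} \<in> U) \<and> (\<forall>w\<in>lists D1 \<times> (UNIV :: 'e set set). {i\<in>Iset. w \<in> set (snd i)} \<in> U)"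
      by (elim exE)
    thus ?thesis using that by (elim conjE)
  qed
  have Uup: "Y \<in> U" if "X \<in> U" "X \<subseteq> Y" "Y \<subseteq> Iset" for X Y using U3 that by blast
  define R2 where "R2 r xs \<longleftrightarrow> Z r xs \<in> U" for r xs
  have Zlen: "length (map (hm i) xs) = length xs" for i xs by simp
  have AM: "almost_morphic L (UNIV :: ('m + 'm list \<times> 'e set) set) R2"
    unfolding almost_morphic_def
  proof (intro conjI allI ballI impI)
    show "(UNIV :: ('m + 'm list \<times> 'e set) set) \<noteq> {}" by simp
  next
    fix n and xs :: "('m + 'm list \<times> 'e set) list" assume len: "length xs = n"
    have Z0: "Z (zero L n) xs = {}"
    proof -
      have "\<not> Rf i (zero L n) (map (hm i) xs)" if "i \<in> Iset" for i
        using fm_zero[OF pfQ[OF that] hm_set[OF that], of xs] len unfolding Rf_def by simp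
      thus ?thesis unfolding Z_def by blast
    qed
    show "\<not> R2 (zero L n) xs" unfolding R2_def Z0 using U2 .
    have Z1: "Z (one L n) xs = Iset"
    proof -
      have "Rf i (one L n) (map (hm i) xs)" if "i \<in> Iset" for i
        using fm_one[OF pfQ[OF that] hm_set[OF that], of xs] len unfolding Rf_def by simp
      thus ?thesis unfolding Z_def by blast
    qed
    show "R2 (one L n) xs" unfolding R2_def Z1 using U6 .
    fix r s assume r: "r \<in> S L n" and s: "s \<in> S L n"
    have ZJ: "Z (join L n r s) xs = Z r xs \<union> Z s xs"
    proof -
      have "Rf i (join L n r s) (map (hm i) xs) \<longleftrightarrow> Rf i r (map (hm i) xs) \<or> Rf i s (map (hm i) xs)" if "i \<in> Iset" for i
        using fm_join[OF pfQ[OF that] hm_set[OF that, of xs], of r s] r s len unfolding Rf_def by simp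
      thus ?thesis unfolding Z_def by blast
    qed
    show "R2 (join L n r s) xs \<longleftrightarrow> R2 r xs \<or> R2 s xs"
    proof
      assume "R2 (join L n r s) xs"
      thus "R2 r xs \<or> R2 s xs" unfolding R2_def ZJ using U5 ZI by blast
    next
      assume "R2 r xs \<or> R2 s xs"
      thus "R2 (join L n r s) xs" unfolding R2_def ZJ using Uup ZI by (metis Un_least Un_upper1 Un_upper2)
    qed
    have ZM: "Z (meet L n r s) xs = Z r xs \<inter> Z s xs"
    proof -
      have "Rf i (meet L n r s) (map (hm i) xs) \<longleftrightarrow> Rf i r (map (hm i) xs) \<and> Rf i s (map (hm i) xs)" if "i \<in> Iset" for i
        using fm_meet[OF pfQ[OF that] hm_set[OF that, of xs], of r s] r s len unfolding Rf_def by simp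
      thus ?thesis unfolding Z_def by blast
    qed
    show "R2 (meet L n r s) xs \<longleftrightarrow> R2 r xs \<and> R2 s xs"
    proof
      assume "R2 (meet L n r s) xs"
      thus "R2 r xs \<and> R2 s xs" unfolding R2_def ZM using Uup ZI by (metis Int_lower1 Int_lower2)
    next
      assume "R2 r xs \<and> R2 s xs"
      thus "R2 (meet L n r s) xs" unfolding R2_def ZM using U4 by blast
    qed
  next
    fix n k \<alpha> r and xs :: "('m + 'm list \<times> 'e set) list"
    assume al: "\<alpha> \<in> substs n k" and r: "r \<in> S L n" and len: "length xs = k"
    have "Z (sub L n k \<alpha> r) xs = Z r (tup n \<alpha> xs)"
    proof -
      have "Rf i (sub L n k \<alpha> r) (map (hm i) xs) \<longleftrightarrow> Rf i r (map (hm i) (tup n \<alpha> xs))" if "i \<in> Iset" for i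
      proof -
        have al': "\<alpha> \<in> substs n (length (map (hm i) xs))" using al len by simp
        have "map (hm i) (tup n \<alpha> xs) = tup n \<alpha> (map (hm i) xs)"
          using tup_map[of \<alpha> n xs] al len by simp
        thus ?thesis using fm_sub[OF pfQ[OF that] hm_set[OF that, of xs] al' r] len unfolding Rf_def by simp
      qed
      thus ?thesis unfolding Z_def by blast
    qed
    thus "R2 (sub L n k \<alpha> r) xs \<longleftrightarrow> R2 r (tup n \<alpha> xs)" unfolding R2_def by simp
  next
    fix n r and xs :: "('m + 'm list \<times> 'e set) list" and y :: "'m + 'm list \<times> 'e set"
    assume r: "r \<in> S L (Suc n)" and len: "length xs = n" and h: "R2 r (xs @ [y])"
    have "Z r (xs @ [y]) \<subseteq> Z (ex L n r) xs"
    proof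
      fix i assume "i \<in> Z r (xs @ [y])"
      hence i: "i \<in> Iset" and R: "Rf i r (map (hm i) xs @ [hm i y])" unfolding Z_def by auto
      have st: "set (map (hm i) xs @ [hm i y]) \<subseteq> {1..Nn i}" using hm_set[OF i, of "xs @ [y]"] by simp
      have "sub L (length (map (hm i) xs)) (Nn i) (pos (map (hm i) xs)) (ex L (length (map (hm i) xs)) r) \<in> Qi i"
        by (rule fm_ex[OF pf_up[OF pfQ[OF i]] st]) (use r R len in \<open>simp_all add: Rf_def\<close>)
      thus "i \<in> Z (ex L n r) xs" unfolding Z_def Rf_def using i len by simp
    qed
    thus "R2 (ex L n r) xs" using h Uup ZI unfolding R2_def by blast
  qed
  have Yas: "{i\<in>Iset. set as \<subseteq> set (fst i)} \<in> U" if "as \<in> lists D1" for as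
    using that
  proof (induction as)
    case Nil thus ?case using U6 by simp
  next
    case (Cons a as)
    have "{i\<in>Iset. set (a # as) \<subseteq> set (fst i)} = {i\<in>Iset. a \<in> set (fst i)} \<inter> {i\<in>Iset. set as \<subseteq> set (fst i)}"
      by auto
    thus ?case using U4 U7 Cons by auto
  qed
  have SUB: "substructure L Inl D1 R1 (UNIV :: ('m + 'm list \<times> 'e set) set) R2"
    unfolding substructure_def
  proof (intro conjI allI ballI impI)
    show "inj_on Inl D1" by simp
    show "Inl ` D1 \<subseteq> UNIV" by simp
    fix n r as assume r: "r \<in> S L n" and as: "as \<in> lists D1" and len: "length as = n"
    define Y where "Y = {i\<in>Iset. set as \<subseteq> set (fst i)}"
    have Y: "Y \<in> U" unfolding Y_def using Yas[OF as] .
    have eq: "Rf i r (map (hm i) (map Inl as)) \<longleftrightarrow> R1 r as" if "i \<in> Y" for i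
    proof -
      have i: "i \<in> Iset" "set as \<subseteq> set (fst i)" using that unfolding Y_def by auto
      have mp: "map (hm i) (map Inl as) = map (posa (fst i)) as" unfolding hm_def by simp
      have D: "\<forall>cs. set cs \<subseteq> set (fst i) \<longrightarrow> (\<forall>r\<in>S L (length cs).
        sub L (length cs) (Nn i) (pos (map (posa (fst i)) cs)) r \<in> Qi i \<longleftrightarrow> R1 r cs)"
        using gQ[OF i(1)] unfolding goodQ_def by blast
      have "sub L (length as) (Nn i) (pos (map (posa (fst i)) as)) r \<in> Qi i \<longleftrightarrow> R1 r as"
        using D i(2) r len by blast
      thus ?thesis unfolding Rf_def mp by simp
    qed
    show "R2 r (map Inl as) \<longleftrightarrow> R1 r as"
    proof (cases "R1 r as")
      case True
      hence "Y \<subseteq> Z r (map Inl as)" using eq unfolding Z_def Y_def by blast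
      thus ?thesis using True Uup[OF Y] ZI unfolding R2_def by blast
    next
      case False
      hence "Z r (map Inl as) \<inter> Y = {}" using eq unfolding Z_def by blast
      thus ?thesis using False U4 U2 Y unfolding R2_def by metis
    qed
  qed
  have WIT: "has_witnesses L Inl D1 R1 (UNIV :: ('m + 'm list \<times> 'e set) set) R2"
    unfolding has_witnesses_def
  proof (intro ballI allI impI)
    fix as G assume as: "as \<in> lists D1" and pf: "prime_filter L (Suc (length as)) G"
      and ci: "cyl_inv L (length as) G = ptype L R1 as"
    define w where "w = (as, G)"
    have vw: "vw w" unfolding vw_def w_def using pf ci by simp
    have eG: "effG w = G" unfolding effG_def using vw w_def by simp
    define Y where "Y = {i\<in>Iset. w \<in> set (snd i)}"
    have Y: "Y \<in> U" unfolding Y_def using U8 as w_def by blast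
    have "\<forall>r\<in>G. R2 r (map Inl as @ [Inr w])"
    proof
      fix r assume r: "r \<in> G"
      have "Y \<subseteq> Z r (map Inl as @ [Inr w])"
      proof
        fix i assume "i \<in> Y"
        hence i: "i \<in> Iset" "w \<in> set (snd i)" unfolding Y_def by auto
        have mp: "map (hm i) (map Inl as @ [Inr w]) = map (posa (fst i)) (fst w) @ [wpos i w]"
          unfolding hm_def w_def using i(2) w_def by simp
        have X: "sub L (Suc (length (fst w))) (Nn i) (pos (map (posa (fst i)) (fst w) @ [wpos i w])) r \<in> Qi i"
          using gQ[OF i(1)] i(2) r eG unfolding goodQ_def by blast
        have "Rf i r (map (hm i) (map Inl as @ [Inr w]))" unfolding Rf_def mp using X by simp
        thus "i \<in> Z r (map Inl as @ [Inr w])" unfolding Z_def using i(1) by blast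
      qed
      thus "R2 r (map Inl as @ [Inr w])" unfolding R2_def using Uup[OF Y] ZI by blast
    qed
    thus "\<exists>b\<in>UNIV. \<forall>r\<in>G. R2 r (map Inl as @ [b])" by blast
  qed
  show ?thesis using AM SUB WIT by blast
qed

end

theorem lemma4p13:
  fixes L :: "'e pe_alg" and D1 :: "'m set" and R1 :: "'e \<Rightarrow> 'm list \<Rightarrow> bool"
  assumes "pe_algebra L" "ax1 L" "ax2 L" "ax3 L" "ax7 L" "ax8 L" "ax9 L" "ax10 L"
    and "almost_morphic L D1 R1"
  shows "\<exists>(D2 :: ('m + 'm list \<times> 'e set) set) R2.
           almost_morphic L D2 R2 \<and> substructure L Inl D1 R1 D2 R2 \<and>
           has_witnesses L Inl D1 R1 D2 R2"
proof -
  interpret pem L D1 R1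
    using assms by (unfold_locales) auto
  show ?thesis by (rule main)
qed


end
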